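(* Let $(M,\Delta,S)$ be a generalized counital $C^*$-bialgebra with target and source Cartan subalgebras $N_t$, $N_s$. Let $\theta_t$ be the trace of the left regular representation of $N_t$ (i.e. $\theta_t(n)=\mathrm{Tr}(m\mapsto nm)$ on $N_t$) and put $\varepsilon:=\theta_t\circ\varepsilon_t:M\to\mathbb{C}$. Then $(M,\Delta,S,\varepsilon)$ is a weak Kac algebra if and only if $(\mathrm{id}\otimes\varepsilon)\circ\Delta=\mathrm{id}$.
   Context: All algebras are finite-dimensional over $\mathbb{C}$; $\varsigma$ denotes the flip and $\mu(x\otimes y)=xy$. A generalized coinvolutive $C^*$-bialgebra is a triple $(M,\Delta,S)$ where $M$ is a finite-dimensional $C^*$-algebra; $\Delta:M\to M\otimes M$ is an injective, not necessarily unital, $*$-homomorphism with $(\Delta\otimes\mathrm{id})\Delta=(\mathrm{id}\otimes\Delta)\Delta$; and $S:M\to M$ is a linear, unital, antimultiplicative, $*$-preserving bijection with $S^2=\mathrm{id}$ and $(S\otimes S)\circ\Delta=\varsigma\circ\Delta\circ S$. Let $e=\Delta(1)$, $N_t=\{x:\Delta(x)=e(x\otimes1)=(x\otimes1)e\}$, $N_s=\{x:\Delta(x)=e(1\otimes x)=(1\otimes x)e\}$, $\varepsilon_t=\mu(\mathrm{id}\otimes S)\Delta$, $\varepsilon_s=\mu(S\otimes\mathrm{id})\Delta$. It is called counital if $\varepsilon_t(1)=1$, $\varepsilon_t(M)\subset N_t$, and $(\mathrm{id}\otimes\varepsilon_t)\Delta(x)=e(x\otimes1)$ for all $x\in N_s$.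 A weak Kac algebra is a quadruple $(M,\Delta,S,\varepsilon)$ with $(M,\Delta,S)$ a generalized coinvolutive $C^*$-bialgebra and $\varepsilon:M\to\mathbb{C}$ linear with $(\varepsilon\otimes\mathrm{id})\Delta=(\mathrm{id}\otimes\varepsilon)\Delta=\mathrm{id}$, $\varepsilon\circ S=\varepsilon$, $\varepsilon(x^* )=\overline{\varepsilon(x)}$, $(\varepsilon\otimes\varepsilon)((x\otimes1)e(1\otimes y))=\varepsilon(xy)$ for all $x,y$, and $(\varepsilon_s\otimes\mathrm{id})\Delta(x)=(1\otimes x)e$ for all $x$. *)

theory Defs
  imports "HOL-Analysis.Analysis"
begin

text \<open>A finite-dimensional C*-algebra is represented (up to *-isomorphism) as a unital
  *-subalgebra M of the full matrix algebra complex^'n^'n. The algebraic tensor product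
  M \<otimes> M is realised inside complex^('n\<times>'n)^('n\<times>'n) via the Kronecker product.\<close>

definition cscale :: "complex \<Rightarrow> complex^'a::finite^'b::finite \<Rightarrow> complex^'a::finite^'b::finite" where
  "cscale c A = (\<chi> i j. c * A$i$j)"

definition adj :: "complex^'a::finite^'a::finite \<Rightarrow> complex^'a::finite^'a::finite" where
  "adj A = (\<chi> i j. cnj (A$j$i))"

definition kron :: "complex^'a::finite^'a::finite \<Rightarrow> complex^'b::finite^'b::finite \<Rightarrow> complex^('a::finite\<times>'b::finite)^('a::finite\<times>'b::finite)" where
  "kron A B = (\<chi> p q. A$(fst p)$(fst q) * B$(snd p)$(snd q))"

definition flip :: "complex^('a::finite\<times>'b::finite)^('a::finite\<times>'b::finite) \<Rightarrow> complex^('b::finite\<times>'a::finite)^('b::finite\<times>'a::finite)" where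
  "flip X = (\<chi> p q. X$(prod.swap p)$(prod.swap q))"

definition reassoc_idx :: "'a::finite\<times>('b::finite\<times>'c::finite) \<Rightarrow> ('a::finite\<times>'b::finite)\<times>'c::finite" where
  "reassoc_idx p = ((fst p, fst (snd p)), snd (snd p))"

definition rassoc ::
  "complex^(('a::finite\<times>'b::finite)\<times>'c::finite)^(('a::finite\<times>'b::finite)\<times>'c::finite) \<Rightarrow> complex^('a::finite\<times>('b::finite\<times>'c::finite))^('a::finite\<times>('b::finite\<times>'c::finite))" where
  "rassoc X = (\<chi> p q. X$(reassoc_idx p)$(reassoc_idx q))"

definition is_star_subalg :: "(complex^'n^'n) set \<Rightarrow> bool" where
  "is_star_subalg M \<longleftrightarrow> 0 \<in> M \<and> mat 1 \<in> M \<and>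
     (\<forall>x\<in>M. \<forall>y\<in>M. x + y \<in> M \<and> x ** y \<in> M) \<and>
     (\<forall>c. \<forall>x\<in>M. cscale c x \<in> M) \<and> (\<forall>x\<in>M. adj x \<in> M)"

definition tensor_space :: "(complex^'a::finite^'a::finite) set \<Rightarrow> (complex^'b::finite^'b::finite) set \<Rightarrow> (complex^('a::finite\<times>'b::finite)^('a::finite\<times>'b::finite)) set" where
  "tensor_space M N = {(\<Sum>i<k. kron (a i) (b i)) | (k::nat) a b. \<forall>i<k. a i \<in> M \<and> b i \<in> N}"

text \<open>The linear map on M \<otimes> N induced by a bilinear map h on M \<times> N:
  a \<otimes> b \<mapsto> h a b (well defined for bilinear h).\<close>
definition tensor_ext :: "(complex^'a::finite^'a::finite) set \<Rightarrow> (complex^'b::finite^'b::finite) set \<Rightarrow>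
    (complex^'a::finite^'a::finite \<Rightarrow> complex^'b::finite^'b::finite \<Rightarrow> 'c::comm_monoid_add) \<Rightarrow> complex^('a::finite\<times>'b::finite)^('a::finite\<times>'b::finite) \<Rightarrow> 'c" where
  "tensor_ext M N h X = (SOME Y. \<exists>(k::nat) a b. (\<forall>i<k. a i \<in> M \<and> b i \<in> N) \<and>
      X = (\<Sum>i<k. kron (a i) (b i)) \<and> Y = (\<Sum>i<k. h (a i) (b i)))"

definition clinear_on :: "(complex^'a::finite^'a::finite) set \<Rightarrow> (complex^'a::finite^'a::finite \<Rightarrow> complex^'b::finite^'b::finite) \<Rightarrow> bool" where
  "clinear_on M f \<longleftrightarrow> (\<forall>x\<in>M. \<forall>y\<in>M. f (x + y) = f x + f y) \<and>
      (\<forall>c. \<forall>x\<in>M. f (cscale c x) = cscale c (f x))"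

definition cfunctional_on :: "(complex^'a::finite^'a::finite) set \<Rightarrow> (complex^'a::finite^'a::finite \<Rightarrow> complex) \<Rightarrow> bool" where
  "cfunctional_on M f \<longleftrightarrow> (\<forall>x\<in>M. \<forall>y\<in>M. f (x + y) = f x + f y) \<and>
      (\<forall>c. \<forall>x\<in>M. f (cscale c x) = c * f x)"

definition cbasis :: "(complex^'a::finite^'a::finite) set \<Rightarrow> (complex^'a::finite^'a::finite) list \<Rightarrow> bool" where
  "cbasis V bs \<longleftrightarrow> set bs \<subseteq> V \<and>
     (\<forall>c. (\<Sum>i<length bs. cscale (c i) (bs!i)) = 0 \<longrightarrow> (\<forall>i<length bs. c i = 0)) \<and>
     V = {(\<Sum>i<length bs. cscale (c i) (bs!i)) | c. True}"

definition lin_trace :: "(complex^'a::finite^'a::finite) set \<Rightarrow> (complex^'a::finite^'a::finite \<Rightarrow> complex^'a::finite^'a::finite) \<Rightarrow> complex" where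
  "lin_trace V L = (THE t. \<forall>bs c. cbasis V bs \<and>
      (\<forall>i<length bs. L (bs!i) = (\<Sum>j<length bs. cscale (c i j) (bs!j))) \<longrightarrow>
      t = (\<Sum>i<length bs. c i i))"

context
  fixes M :: "(complex^'n::finite^'n) set"
    and \<Delta> :: "complex^'n^'n \<Rightarrow> complex^('n\<times>'n)^('n\<times>'n)"
    and S :: "complex^'n^'n \<Rightarrow> complex^'n^'n"
begin

definition unit_e :: "complex^('n\<times>'n)^('n\<times>'n)" where
  "unit_e = \<Delta> (mat 1)"

definition N_t :: "(complex^'n^'n) set" where
  "N_t = {x\<in>M. \<Delta> x = unit_e ** kron x (mat 1) \<and> \<Delta> x = kron x (mat 1) ** unit_e}"

definition N_s :: "(complex^'n^'n) set" where
  "N_s = {x\<in>M. \<Delta> x = unit_e ** kron (mat 1) x \<and> \<Delta> x = kron (mat 1) x ** unit_e}"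

definition eps_t :: "complex^'n^'n \<Rightarrow> complex^'n^'n" where
  "eps_t x = tensor_ext M M (\<lambda>a b. a ** S b) (\<Delta> x)"

definition eps_s :: "complex^'n^'n \<Rightarrow> complex^'n^'n" where
  "eps_s x = tensor_ext M M (\<lambda>a b. S a ** b) (\<Delta> x)"

definition gen_coinv_bialg :: bool where
  "gen_coinv_bialg \<longleftrightarrow> is_star_subalg M \<and>
     clinear_on M \<Delta> \<and> (\<forall>x\<in>M. \<Delta> x \<in> tensor_space M M) \<and> inj_on \<Delta> M \<and>
     (\<forall>x\<in>M. \<forall>y\<in>M. \<Delta> (x ** y) = \<Delta> x ** \<Delta> y) \<and> (\<forall>x\<in>M. \<Delta> (adj x) = adj (\<Delta> x)) \<and>
     (\<forall>x\<in>M. rassoc (tensor_ext M M (\<lambda>a b. kron (\<Delta> a) b) (\<Delta> x))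
              = tensor_ext M M (\<lambda>a b. kron a (\<Delta> b)) (\<Delta> x)) \<and>
     clinear_on M S \<and> bij_betw S M M \<and> S (mat 1) = mat 1 \<and>
     (\<forall>x\<in>M. \<forall>y\<in>M. S (x ** y) = S y ** S x) \<and> (\<forall>x\<in>M. S (adj x) = adj (S x)) \<and>
     (\<forall>x\<in>M. S (S x) = x) \<and>
     (\<forall>x\<in>M. tensor_ext M M (\<lambda>a b. kron (S a) (S b)) (\<Delta> x) = flip (\<Delta> (S x)))"

definition counital :: bool where
  "counital \<longleftrightarrow> eps_t (mat 1) = mat 1 \<and> eps_t ` M \<subseteq> N_t \<and>
     (\<forall>x\<in>N_s. tensor_ext M M (\<lambda>a b. kron a (eps_t b)) (\<Delta> x) = unit_e ** kron x (mat 1))"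

definition weak_kac :: "(complex^'n^'n \<Rightarrow> complex) \<Rightarrow> bool" where
  "weak_kac \<epsilon> \<longleftrightarrow> gen_coinv_bialg \<and> cfunctional_on M \<epsilon> \<and>
     (\<forall>x\<in>M. tensor_ext M M (\<lambda>a b. cscale (\<epsilon> a) b) (\<Delta> x) = x) \<and>
     (\<forall>x\<in>M. tensor_ext M M (\<lambda>a b. cscale (\<epsilon> b) a) (\<Delta> x) = x) \<and>
     (\<forall>x\<in>M. \<epsilon> (S x) = \<epsilon> x) \<and> (\<forall>x\<in>M. \<epsilon> (adj x) = cnj (\<epsilon> x)) \<and>
     (\<forall>x\<in>M. \<forall>y\<in>M. tensor_ext M M (\<lambda>a b. \<epsilon> a * \<epsilon> b)
                         (kron x (mat 1) ** unit_e ** kron (mat 1) y) = \<epsilon> (x ** y)) \<and>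
     (\<forall>x\<in>M. tensor_ext M M (\<lambda>a b. kron (eps_s a) b) (\<Delta> x) = kron (mat 1) x ** unit_e)"

definition theta_t :: "complex^'n^'n \<Rightarrow> complex" where
  "theta_t n = lin_trace N_t (\<lambda>m. n ** m)"

definition canonical_eps :: "complex^'n^'n \<Rightarrow> complex" where
  "canonical_eps x = theta_t (eps_t x)"

end

end

theory Submission
  imports Defs
begin

lemma cscale_nth[simp]: "cscale c A $ i $ j = c * A $ i $ j"
  by (simp add: cscale_def)
lemma adj_nth[simp]: "adj A $ i $ j = cnj (A $ j $ i)"
  by (simp add: adj_def)
lemma kron_nth[simp]: "kron A B $ p $ q = A$(fst p)$(fst q) * B$(snd p)$(snd q)"
  by (simp add: kron_def)
lemma flip_nth[simp]: "flip X $ p $ q = X$(prod.swap p)$(prod.swap q)"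
  by (simp add: flip_def)

lemma cscale_add: "cscale c (A + B) = cscale c A + cscale c B"
  by (simp add: vec_eq_iff ring_distribs)
lemma cscale_add_left: "cscale (a + b) A = cscale a A + cscale b A"
  by (simp add: vec_eq_iff ring_distribs)
lemma cscale_cscale[simp]: "cscale a (cscale b A) = cscale (a * b) A"
  by (simp add: vec_eq_iff)
lemma cscale_one[simp]: "cscale 1 A = A"
  by (simp add: vec_eq_iff)
lemma cscale_zero_left[simp]: "cscale 0 A = 0"
  by (simp add: vec_eq_iff)
lemma cscale_zero_right[simp]: "cscale c 0 = 0"
  by (simp add: vec_eq_iff)
lemma cscale_minus_one: "cscale (-1) A = - A"
  by (simp add: vec_eq_iff)
lemma cscale_sum: "cscale c (sum f I) = (\<Sum>i\<in>I. cscale c (f i))"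
  by (induct I rule: infinite_finite_induct) (auto simp: cscale_add)
lemma cscale_sum_left: "cscale (sum f I) A = (\<Sum>i\<in>I. cscale (f i) A)"
  by (induct I rule: infinite_finite_induct) (auto simp: cscale_add_left)

lemma cscale_mult_left: "cscale c A ** B = cscale c (A ** B)"
  by (simp add: vec_eq_iff matrix_matrix_mult_def sum_distrib_left mult.assoc)
lemma cscale_mult_right: "A ** cscale c B = cscale c (A ** B)"
  by (simp add: vec_eq_iff matrix_matrix_mult_def sum_distrib_left mult_ac)
lemma matrix_add_rdistrib': "(A + B) ** C = A ** C + B ** (C :: 'a::semiring_1^'p^'n)"
  by (simp add: vec_eq_iff matrix_matrix_mult_def sum.distrib ring_distribs)
lemma matrix_sum_left: "(sum f I) ** C = (\<Sum>i\<in>I. f i ** C)"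
  by (induct I rule: infinite_finite_induct) (auto simp: matrix_add_rdistrib')
lemma matrix_sum_right: "C ** (sum f I) = (\<Sum>i\<in>I. C ** f i)"
  by (induct I rule: infinite_finite_induct) (auto simp: matrix_add_ldistrib)

lemma kron_add_left: "kron (A + B) C = kron A C + kron B C"
  by (simp add: vec_eq_iff ring_distribs)
lemma kron_add_right: "kron A (B + C) = kron A B + kron A C"
  by (simp add: vec_eq_iff ring_distribs)
lemma kron_cscale_left: "kron (cscale c A) B = cscale c (kron A B)"
  by (simp add: vec_eq_iff mult.assoc)
lemma kron_cscale_right: "kron A (cscale c B) = cscale c (kron A B)"
  by (simp add: vec_eq_iff mult_ac)
lemma kron_zero_left[simp]: "kron 0 B = 0"
  by (simp add: vec_eq_iff)
lemma kron_zero_right[simp]: "kron A 0 = 0"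
  by (simp add: vec_eq_iff)
lemma kron_sum_left: "kron (sum f I) B = (\<Sum>i\<in>I. kron (f i) B)"
  by (induct I rule: infinite_finite_induct) (auto simp: kron_add_left)
lemma kron_sum_right: "kron A (sum f I) = (\<Sum>i\<in>I. kron A (f i))"
  by (induct I rule: infinite_finite_induct) (auto simp: kron_add_right)

lemma kron_mult: "kron A B ** kron C D = kron (A ** C) (B ** D)"
  apply (simp add: vec_eq_iff matrix_matrix_mult_def sum_product)
  apply (simp add: UNIV_Times_UNIV[symmetric] sum.cartesian_product case_prod_beta del: UNIV_Times_UNIV)
  by (simp add: mult_ac)

lemma kron_one: "kron (mat 1 :: complex^'a::finite^'a) (mat 1 :: complex^'b::finite^'b) = mat 1"
  by (auto simp: vec_eq_iff mat_def prod_eq_iff)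

lemma adj_add: "adj (A + B) = adj A + adj B"
  by (simp add: vec_eq_iff)
lemma adj_cscale: "adj (cscale c A) = cscale (cnj c) (adj A)"
  by (simp add: vec_eq_iff)
lemma adj_adj[simp]: "adj (adj A) = A"
  by (simp add: vec_eq_iff)
lemma adj_mult: "adj (A ** B) = adj B ** adj A"
  by (simp add: vec_eq_iff matrix_matrix_mult_def mult.commute)
lemma adj_sum: "adj (sum f I) = (\<Sum>i\<in>I. adj (f i))"
  by (induct I rule: infinite_finite_induct) (auto simp: adj_add vec_eq_iff)
lemma adj_mat1[simp]: "adj (mat 1) = mat 1"
  by (simp add: vec_eq_iff mat_def)
lemma adj_zero[simp]: "adj 0 = 0"
  by (simp add: vec_eq_iff)
lemma adj_kron: "adj (kron A B) = kron (adj A) (adj B)"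
  by (simp add: vec_eq_iff)

lemma flip_flip[simp]: "flip (flip X) = X"
  by (simp add: vec_eq_iff)
lemma flip_kron[simp]: "flip (kron A B) = kron B A"
  by (simp add: vec_eq_iff mult.commute)
lemma flip_add: "flip (X + Y) = flip X + flip Y"
  by (simp add: vec_eq_iff)
lemma flip_sum: "flip (sum f I) = (\<Sum>i\<in>I. flip (f i))"
  by (induct I rule: infinite_finite_induct) (auto simp: flip_add vec_eq_iff)
lemma flip_mult: "flip (X ** Y) = flip X ** flip Y"
proof -
  have "(\<Sum>k\<in>UNIV. X $ prod.swap i $ k * Y $ k $ prod.swap j) =
        (\<Sum>k\<in>UNIV. X $ prod.swap i $ prod.swap k * Y $ prod.swap k $ prod.swap j)" for i j
    by (rule sum.reindex_bij_betw[symmetric, where h=prod.swap]) (auto simp: bij_betw_def)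
  then show ?thesis by (simp add: vec_eq_iff matrix_matrix_mult_def)
qed
lemma flip_inj: "flip X = flip Y \<Longrightarrow> X = Y"
  by (metis flip_flip)

definition subsp :: "(complex^'a::finite^'b::finite) set \<Rightarrow> bool" where
  "subsp A \<longleftrightarrow> 0 \<in> A \<and> (\<forall>x\<in>A. \<forall>y\<in>A. x + y \<in> A) \<and> (\<forall>c. \<forall>x\<in>A. cscale c x \<in> A)"

definition bil :: "(complex^'a::finite^'a) set \<Rightarrow> (complex^'b::finite^'b) set \<Rightarrow>
   (complex^'a^'a \<Rightarrow> complex^'b^'b \<Rightarrow> complex) \<Rightarrow> bool" where
  "bil A B h \<longleftrightarrow> (\<forall>a\<in>A. \<forall>a'\<in>A. \<forall>b\<in>B. h (a + a') b = h a b + h a' b) \<and>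
     (\<forall>c. \<forall>a\<in>A. \<forall>b\<in>B. h (cscale c a) b = c * h a b) \<and>
     (\<forall>a\<in>A. \<forall>b\<in>B. \<forall>b'\<in>B. h a (b + b') = h a b + h a b') \<and>
     (\<forall>c. \<forall>a\<in>A. \<forall>b\<in>B. h a (cscale c b) = c * h a b)"

definition bilm :: "(complex^'a::finite^'a) set \<Rightarrow> (complex^'b::finite^'b) set \<Rightarrow>
   (complex^'a^'a \<Rightarrow> complex^'b^'b \<Rightarrow> complex^'p::finite^'q::finite) \<Rightarrow> bool" where
  "bilm A B h \<longleftrightarrow> (\<forall>a\<in>A. \<forall>a'\<in>A. \<forall>b\<in>B. h (a + a') b = h a b + h a' b) \<and>
     (\<forall>c. \<forall>a\<in>A. \<forall>b\<in>B. h (cscale c a) b = cscale c (h a b)) \<and>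
     (\<forall>a\<in>A. \<forall>b\<in>B. \<forall>b'\<in>B. h a (b + b') = h a b + h a b') \<and>
     (\<forall>c. \<forall>a\<in>A. \<forall>b\<in>B. h a (cscale c b) = cscale c (h a b))"

lemma subspD: assumes "subsp A"
  shows "0 \<in> A" "x \<in> A \<Longrightarrow> y \<in> A \<Longrightarrow> x + y \<in> A" "x \<in> A \<Longrightarrow> cscale c x \<in> A"
  using assms by (auto simp: subsp_def)

lemma subsp_neg: "subsp A \<Longrightarrow> x \<in> A \<Longrightarrow> - x \<in> A"
  by (metis cscale_minus_one subspD(3))

lemma subsp_diff: "subsp A \<Longrightarrow> x \<in> A \<Longrightarrow> y \<in> A \<Longrightarrow> x - y \<in> A"
  by (metis diff_conv_add_uminus subspD(2) subsp_neg)

lemma subsp_sum: "subsp A \<Longrightarrow> (\<And>i. i \<in> I \<Longrightarrow> f i \<in> A) \<Longrightarrow> sum f I \<in> A"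
  by (induct I rule: infinite_finite_induct) (auto intro: subspD)

lemma bil_sum_left:
  assumes "subsp A" "bil A B h" "\<And>i. i \<in> I \<Longrightarrow> a i \<in> A" "b \<in> B"
  shows "h (\<Sum>i\<in>I. cscale (d i) (a i)) b = (\<Sum>i\<in>I. d i * h (a i) b)"
  using assms(3)
proof (induct I rule: infinite_finite_induct)
  case (infinite I)
  have "h 0 b = h (cscale 0 0) b" by simp
  also have "\<dots> = 0" using assms subspD(1)[OF assms(1)] unfolding bil_def by force
  finally show ?case using infinite by simp
next
  case empty
  have "h 0 b = h (cscale 0 0) b" by simp
  also have "\<dots> = 0" using assms subspD(1)[OF assms(1)] unfolding bil_def by force
  finally show ?case by simp
next
  case (insert x F)
  have F: "(\<Sum>i\<in>F. cscale (d i) (a i)) \<in> A"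
    using insert by (intro subsp_sum[OF assms(1)]) (auto intro: subspD[OF assms(1)])
  have "h (\<Sum>i\<in>insert x F. cscale (d i) (a i)) b
      = h (cscale (d x) (a x) + (\<Sum>i\<in>F. cscale (d i) (a i))) b" using insert by simp
  also have "\<dots> = h (cscale (d x) (a x)) b + h (\<Sum>i\<in>F. cscale (d i) (a i)) b"
    using assms(2,4) F insert(4) subspD(3)[OF assms(1)] unfolding bil_def by auto
  also have "\<dots> = d x * h (a x) b + (\<Sum>i\<in>F. d i * h (a i) b)"
    using assms(2,4) insert unfolding bil_def by auto
  finally show ?case using insert by simp
qed

lemma key0:
  fixes a b :: "'i \<Rightarrow> _"
  assumes A: "subsp A" and B: "subsp B" and h: "bil A B h"
  shows "finite I \<Longrightarrow> (\<forall>i\<in>I. a i \<in> A \<and> b i \<in> B) \<Longrightarrow> (\<Sum>i\<in>I. kron (a i) (b i)) = 0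
     \<Longrightarrow> (\<Sum>i\<in>I. h (a i) (b i)) = 0"
proof (induction "card I" arbitrary: I b rule: less_induct)
  case (less I b)
  show ?case
  proof (cases "\<forall>c. (\<Sum>i\<in>I. cscale (c i) (a i)) = 0 \<longrightarrow> (\<forall>i\<in>I. c i = 0)")
    case True
    have b0: "b i = 0" if "i \<in> I" for i
    proof -
      have "b i $ r $ s = 0" for r s
      proof -
        have "(\<Sum>i\<in>I. cscale (b i $ r $ s) (a i)) = 0"
        proof (subst vec_eq_iff, intro allI, subst vec_eq_iff, intro allI)
          fix r' s'
          have "(\<Sum>i\<in>I. kron (a i) (b i)) $ (r', r) $ (s', s) = 0" using less(4) by simp
          then show "(\<Sum>i\<in>I. cscale (b i $ r $ s) (a i)) $ r' $ s' = 0 $ r' $ s'"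
            by (simp add: mult.commute)
        qed
        then show ?thesis using True[rule_format, of "\<lambda>i. b i $ r $ s"] that by simp
      qed
      then show ?thesis by (simp add: vec_eq_iff)
    qed
    have "h (a i) (b i) = 0" if "i \<in> I" for i
    proof -
      have "h (a i) (b i) = h (a i) (cscale 0 0)" using b0 that by simp
      also have "\<dots> = 0" using h subspD(1)[OF B] less(3) that unfolding bil_def by force
      finally show ?thesis .
    qed
    then show ?thesis by simp
  next
    case False
    then obtain c j where j: "j \<in> I" "c j \<noteq> 0" and c: "(\<Sum>i\<in>I. cscale (c i) (a i)) = 0"
      by blast
    define J where "J = I - {j}"
    define d where "d i = - c i / c j" for i
    have finJ: "finite J" using less(2) J_def by simp
    have aj: "a j = (\<Sum>i\<in>J. cscale (d i) (a i))"
    proof -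
      have "cscale (c j) (a j) + (\<Sum>i\<in>J. cscale (c i) (a i)) = 0"
        using c j less(2) unfolding J_def by (simp add: sum.remove)
      then have "\<forall>r s. c j * a j $ r $ s + (\<Sum>i\<in>J. c i * a i $ r $ s) = 0"
        by (simp add: vec_eq_iff)
      then have "\<forall>r s. a j $ r $ s = (\<Sum>i\<in>J. d i * a i $ r $ s)"
        using j(2) unfolding d_def
        by (auto simp: sum_divide_distrib[symmetric] sum_negf field_simps eq_neg_iff_add_eq_0)
      then show ?thesis by (simp add: vec_eq_iff)
    qed
    define b' where "b' i = b i + cscale (d i) (b j)" for i
    have inJ: "\<forall>i\<in>J. a i \<in> A \<and> b' i \<in> B"
      using less(3) j unfolding J_def b'_def by (auto intro: subspD[OF B])
    have sumI: "(\<Sum>i\<in>I. f i) = f j + (\<Sum>i\<in>J. f i)" for f :: "'i \<Rightarrow> 'z::comm_monoid_add"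
      using j less(2) unfolding J_def by (simp add: sum.remove)
    have "(\<Sum>i\<in>J. kron (a i) (b' i)) = (\<Sum>i\<in>J. kron (a i) (b i)) + kron (a j) (b j)"
      unfolding b'_def aj
      by (simp add: kron_add_right kron_cscale_right kron_sum_left kron_cscale_left sum.distrib)
    also have "\<dots> = (\<Sum>i\<in>I. kron (a i) (b i))" by (simp add: sumI add.commute)
    finally have k0: "(\<Sum>i\<in>J. kron (a i) (b' i)) = 0" using less(4) by simp
    have lt: "card J < card I" using j less(2) unfolding J_def by (metis card_Diff1_less)
    have IH: "(\<Sum>i\<in>J. h (a i) (b' i)) = 0"
      using less(1)[OF lt finJ inJ k0] .
    have "(\<Sum>i\<in>J. h (a i) (b' i)) = (\<Sum>i\<in>J. h (a i) (b i) + d i * h (a i) (b j))"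
    proof (rule sum.cong[OF refl])
      fix i assume "i \<in> J"
      then have ai: "a i \<in> A" "b i \<in> B" and bj: "b j \<in> B" using less(3) j unfolding J_def by auto
      have cb: "cscale (d i) (b j) \<in> B" using subspD(3)[OF B bj] .
      show "h (a i) (b' i) = h (a i) (b i) + d i * h (a i) (b j)"
        using h ai bj cb unfolding b'_def bil_def by auto
    qed
    also have "\<dots> = (\<Sum>i\<in>J. h (a i) (b i)) + h (a j) (b j)"
      unfolding sum.distrib aj
      using bil_sum_left[OF A h, of J a "b j" d] less(3) j unfolding J_def by auto
    also have "\<dots> = (\<Sum>i\<in>I. h (a i) (b i))" by (simp add: sumI add.commute)
    finally show ?thesis using IH by simp
  qed
qed

lemma kron_neg_right: "kron A (- B) = - kron A B"
  by (simp add: vec_eq_iff)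

lemma key:
  fixes a b :: "'i \<Rightarrow> _" and c d :: "'j \<Rightarrow> _"
  assumes A: "subsp A" and B: "subsp B" and h: "bil A B h"
    and fin: "finite I" "finite J"
    and ab: "\<forall>i\<in>I. a i \<in> A \<and> b i \<in> B" and cd: "\<forall>j\<in>J. c j \<in> A \<and> d j \<in> B"
    and eq: "(\<Sum>i\<in>I. kron (a i) (b i)) = (\<Sum>j\<in>J. kron (c j) (d j))"
  shows "(\<Sum>i\<in>I. h (a i) (b i)) = (\<Sum>j\<in>J. h (c j) (d j))"
proof -
  define K where "K = Inl ` I \<union> Inr ` J"
  define a' where "a' = case_sum a c"
  define b' where "b' = case_sum b (\<lambda>j. - d j)"
  have sK: "(\<Sum>k\<in>K. f k) = (\<Sum>i\<in>I. f (Inl i)) + (\<Sum>j\<in>J. f (Inr j))" for f :: "_ \<Rightarrow> 'z::comm_monoid_add"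
    unfolding K_def using fin
    by (subst sum.union_disjoint) (auto simp: sum.reindex)
  have negd: "\<forall>j\<in>J. - d j \<in> B" using cd subsp_neg[OF B] by blast
  have inK: "\<forall>k\<in>K. a' k \<in> A \<and> b' k \<in> B"
  proof
    fix k assume "k \<in> K"
    then show "a' k \<in> A \<and> b' k \<in> B"
    proof (cases k)
      case (Inl i) then show ?thesis using \<open>k \<in> K\<close> ab unfolding K_def a'_def b'_def by auto
    next
      case (Inr j) then show ?thesis using \<open>k \<in> K\<close> cd negd unfolding K_def a'_def b'_def by auto
    qed
  qed
  have "(\<Sum>k\<in>K. kron (a' k) (b' k)) = 0"
    unfolding sK a'_def b'_def using eq
    by (simp add: kron_neg_right sum_negf)
  from key0[OF A B h _ inK this] have "(\<Sum>k\<in>K. h (a' k) (b' k)) = 0" using fin K_def by simp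
  moreover have "h (c j) (- d j) = - h (c j) (d j)" if "j \<in> J" for j
    using h cd that unfolding bil_def by (metis cscale_minus_one mult_minus1)
  ultimately show ?thesis unfolding sK a'_def b'_def by (simp add: sum_negf eq_neg_iff_add_eq_0)
qed

lemma bilm_comp: "bilm A B h \<Longrightarrow> bil A B (\<lambda>a b. h a b $ r $ s)"
  unfolding bilm_def bil_def by auto

lemma keym:
  fixes a b :: "'i \<Rightarrow> _" and c d :: "'j \<Rightarrow> _"
  assumes A: "subsp A" and B: "subsp B" and h: "bilm A B h"
    and fin: "finite I" "finite J"
    and ab: "\<forall>i\<in>I. a i \<in> A \<and> b i \<in> B" and cd: "\<forall>j\<in>J. c j \<in> A \<and> d j \<in> B"
    and eq: "(\<Sum>i\<in>I. kron (a i) (b i)) = (\<Sum>j\<in>J. kron (c j) (d j))"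
  shows "(\<Sum>i\<in>I. h (a i) (b i)) = (\<Sum>j\<in>J. h (c j) (d j))"
  using key[OF A B bilm_comp[OF h] fin ab cd eq] by (simp add: vec_eq_iff)

lemma te_exists:
  fixes a b :: "'i \<Rightarrow> _"
  assumes fin: "finite I" and ab: "\<forall>i\<in>I. a i \<in> A \<and> b i \<in> B"
  shows "\<exists>(k::nat) a' b'. (\<forall>i<k. a' i \<in> A \<and> b' i \<in> B) \<and>
      (\<Sum>i\<in>I. kron (a i) (b i)) = (\<Sum>i<k. kron (a' i) (b' i)) \<and>
      (\<Sum>i\<in>I. h (a i) (b i)) = (\<Sum>i<k. h (a' i) (b' i))"
proof -
  obtain f where f: "bij_betw f {0..<card I} I" using ex_bij_betw_nat_finite[OF fin] by blast
  have r: "(\<Sum>i\<in>I. g i) = (\<Sum>i<card I. g (f i))" for g :: "'i \<Rightarrow> 'z::comm_monoid_add"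
    using sum.reindex_bij_betw[OF f, of g] by (simp add: atLeast0LessThan)
  show ?thesis
    apply (rule exI[of _ "card I"], rule exI[of _ "a \<circ> f"], rule exI[of _ "b \<circ> f"])
    using ab f by (auto simp: r bij_betw_def)
qed

lemma te:
  fixes a b :: "'i \<Rightarrow> _"
  assumes A: "subsp A" and B: "subsp B" and h: "bil A B h"
    and fin: "finite I" and ab: "\<forall>i\<in>I. a i \<in> A \<and> b i \<in> B"
  shows "tensor_ext A B h (\<Sum>i\<in>I. kron (a i) (b i)) = (\<Sum>i\<in>I. h (a i) (b i))"
proof -
  let ?P = "\<lambda>Y. \<exists>(k::nat) a' b'. (\<forall>i<k. a' i \<in> A \<and> b' i \<in> B) \<and>
      (\<Sum>i\<in>I. kron (a i) (b i)) = (\<Sum>i<k. kron (a' i) (b' i)) \<and> Y = (\<Sum>i<k. h (a' i) (b' i))"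
  have ex: "\<exists>Y. ?P Y" using te_exists[OF fin ab, of h] by blast
  have "?P (tensor_ext A B h (\<Sum>i\<in>I. kron (a i) (b i)))"
    unfolding tensor_ext_def by (rule someI_ex[OF ex])
  then obtain k a' b' where k: "\<forall>i<k. a' i \<in> A \<and> b' i \<in> B"
    "(\<Sum>i\<in>I. kron (a i) (b i)) = (\<Sum>i<(k::nat). kron (a' i) (b' i))"
    "tensor_ext A B h (\<Sum>i\<in>I. kron (a i) (b i)) = (\<Sum>i<k. h (a' i) (b' i))" by blast
  show ?thesis using key[OF A B h fin finite_lessThan ab _ k(2)] k(1,3) by simp
qed

lemma tem:
  fixes a b :: "'i \<Rightarrow> _"
  assumes A: "subsp A" and B: "subsp B" and h: "bilm A B h"
    and fin: "finite I" and ab: "\<forall>i\<in>I. a i \<in> A \<and> b i \<in> B"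
  shows "tensor_ext A B h (\<Sum>i\<in>I. kron (a i) (b i)) = (\<Sum>i\<in>I. h (a i) (b i))"
proof -
  let ?P = "\<lambda>Y. \<exists>(k::nat) a' b'. (\<forall>i<k. a' i \<in> A \<and> b' i \<in> B) \<and>
      (\<Sum>i\<in>I. kron (a i) (b i)) = (\<Sum>i<k. kron (a' i) (b' i)) \<and> Y = (\<Sum>i<k. h (a' i) (b' i))"
  have ex: "\<exists>Y. ?P Y" using te_exists[OF fin ab, of h] by blast
  have "?P (tensor_ext A B h (\<Sum>i\<in>I. kron (a i) (b i)))"
    unfolding tensor_ext_def by (rule someI_ex[OF ex])
  then obtain k a' b' where k: "\<forall>i<k. a' i \<in> A \<and> b' i \<in> B"
    "(\<Sum>i\<in>I. kron (a i) (b i)) = (\<Sum>i<(k::nat). kron (a' i) (b' i))"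
    "tensor_ext A B h (\<Sum>i\<in>I. kron (a i) (b i)) = (\<Sum>i<k. h (a' i) (b' i))" by blast
  show ?thesis using keym[OF A B h fin finite_lessThan ab _ k(2)] k(1,3) by simp
qed

lemma tensor_spaceE:
  assumes "X \<in> tensor_space A B"
  obtains k :: nat and a b where "\<forall>i<k. a i \<in> A \<and> b i \<in> B" "X = (\<Sum>i<k. kron (a i) (b i))"
  using assms unfolding tensor_space_def by blast

interpretation cv: vector_space "cscale :: complex \<Rightarrow> complex^'a::finite^'b::finite \<Rightarrow> _"
  by unfold_locales (simp_all add: cscale_add cscale_add_left)

definition unitm :: "'b::finite \<Rightarrow> 'a::finite \<Rightarrow> complex^'a^'b" where
  "unitm r s = (\<chi> i j. if i = r \<and> j = s then 1 else 0)"

lemma unitm_expand: "A = (\<Sum>p\<in>UNIV. cscale (A $ fst p $ snd p) (unitm (fst p) (snd p)))"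
proof -
  have "(\<Sum>p\<in>UNIV. A $ fst p $ snd p * (if i = fst p \<and> j = snd p then 1 else 0)) = A $ i $ j" for i j
  proof -
    have "(\<Sum>p\<in>UNIV. A $ fst p $ snd p * (if i = fst p \<and> j = snd p then 1 else 0))
        = (\<Sum>p\<in>UNIV. if p = (i, j) then A $ fst p $ snd p else 0)"
      by (rule sum.cong) auto
    also have "\<dots> = A $ i $ j" by (simp add: sum.delta')
    finally show ?thesis .
  qed
  then show ?thesis by (simp add: vec_eq_iff unitm_def)
qed

lemma span_unitm: "cv.span (range (\<lambda>p. unitm (fst p) (snd p))) = (UNIV :: (complex^'a::finite^'b::finite) set)"
proof -
  have "A \<in> cv.span (range (\<lambda>p. unitm (fst p) (snd p)))" for A :: "complex^'a^'b"
    by (subst unitm_expand) (intro cv.span_sum cv.span_scale cv.span_base, auto)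
  then show ?thesis by auto
qed

lemma cbasis_exists:
  fixes V :: "(complex^'a::finite^'a) set"
  assumes V: "subsp V" shows "\<exists>bs. cbasis V bs"
proof -
  obtain B where B: "B \<subseteq> V" "cv.independent B" "V \<subseteq> cv.span B" "card B = cv.dim V"
    by (rule cv.basis_exists)
  have finB: "finite B"
    using cv.independent_span_bound[OF _ B(2), of "range (\<lambda>p. unitm (fst p) (snd p))"]
    by (simp add: span_unitm)
  obtain bs where bs: "set bs = B" "distinct bs" using finite_distinct_list[OF finB] by blast
  have bij: "bij_betw (nth bs) {..<length bs} B" using bs by (simp add: bij_betw_nth)
  have re: "(\<Sum>i<length bs. g (bs ! i)) = (\<Sum>v\<in>B. g v)" for g :: "_ \<Rightarrow> complex^'a^'a"
    by (rule sum.reindex_bij_betw[OF bij])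
  define inv where "inv = the_inv_into {..<length bs} (nth bs)"
  have inv: "inv (bs ! i) = i" if "i < length bs" for i
    unfolding inv_def using bij that by (simp add: bij_betw_def the_inv_into_f_f)
  have re2: "(\<Sum>i<length bs. cscale (c i) (bs ! i)) = (\<Sum>v\<in>B. cscale (c (inv v)) v)" for c
  proof -
    have "(\<Sum>i<length bs. cscale (c i) (bs ! i)) = (\<Sum>i<length bs. cscale (c (inv (bs ! i))) (bs ! i))"
      by (rule sum.cong) (auto simp: inv)
    also have "\<dots> = (\<Sum>v\<in>B. cscale (c (inv v)) v)" by (rule re)
    finally show ?thesis .
  qed
  have indep: "\<forall>c. (\<Sum>i<length bs. cscale (c i) (bs ! i)) = 0 \<longrightarrow> (\<forall>i<length bs. c i = 0)"
  proof (intro allI impI)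
    fix c i assume c: "(\<Sum>i<length bs. cscale (c i) (bs ! i)) = 0" and i: "i < length bs"
    have "(\<Sum>v\<in>B. cscale (c (inv v)) v) = 0" using c re2[of c] by argo
    moreover have bi: "bs ! i \<in> B" using i bs(1) by auto
    ultimately have "c (inv (bs ! i)) = 0" using cv.independentD[OF B(2) finB order_refl, of "\<lambda>v. c (inv v)"] by blast
    then show "c i = 0" using inv[OF i] by simp
  qed
  have span: "V = {(\<Sum>i<length bs. cscale (c i) (bs ! i)) | c. True}"
  proof
    show "V \<subseteq> {(\<Sum>i<length bs. cscale (c i) (bs ! i)) | c. True}"
    proof
      fix x assume "x \<in> V"
      then have "x \<in> cv.span B" using B(3) by blast
      then obtain u where u: "x = (\<Sum>v\<in>B. cscale (u v) v)" using cv.span_finite[OF finB] by blast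
      have "x = (\<Sum>i<length bs. cscale (u (bs ! i)) (bs ! i))" using u re[of "\<lambda>v. cscale (u v) v"] by argo
      then show "x \<in> {(\<Sum>i<length bs. cscale (c i) (bs ! i)) | c. True}"
        by (simp only: mem_Collect_eq) (rule exI[of _ "\<lambda>i. u (bs ! i)"], simp)
    qed
    show "{(\<Sum>i<length bs. cscale (c i) (bs ! i)) | c. True} \<subseteq> V"
    proof
      fix x assume "x \<in> {(\<Sum>i<length bs. cscale (c i) (bs ! i)) | c. True}"
      then obtain c where x: "x = (\<Sum>i<length bs. cscale (c i) (bs ! i))" by blast
      have "bs ! i \<in> V" if "i < length bs" for i using B(1) bs(1) that by auto
      then show "x \<in> V" unfolding x by (intro subsp_sum[OF V] subspD(3)[OF V]) auto
    qed
  qed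
  have "cbasis V bs" unfolding cbasis_def using B(1) bs(1) indep span by blast
  then show ?thesis by blast
qed

definition coord :: "(complex^'a::finite^'a) list \<Rightarrow> complex^'a^'a \<Rightarrow> nat \<Rightarrow> complex" where
  "coord bs v = (SOME c. v = (\<Sum>i<length bs. cscale (c i) (bs ! i)))"

lemma coord_eq:
  assumes "cbasis V bs" "v \<in> V"
  shows "v = (\<Sum>i<length bs. cscale (coord bs v i) (bs ! i))"
proof -
  have "\<exists>c. v = (\<Sum>i<length bs. cscale (c i) (bs ! i))" using assms unfolding cbasis_def by blast
  then show ?thesis unfolding coord_def by (rule someI_ex)
qed

lemma sum_cscale_diff:
  "(\<Sum>i\<in>I. cscale (u i) (x i)) - (\<Sum>i\<in>I. cscale (w i) (x i)) = (\<Sum>i\<in>I. cscale (u i - w i) (x i))"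
  by (simp add: vec_eq_iff sum_subtractf left_diff_distrib)

lemma cbasis_nth: "cbasis V bs \<Longrightarrow> i < length bs \<Longrightarrow> bs ! i \<in> V"
  unfolding cbasis_def by (meson nth_mem subsetD)

lemma coord_unique:
  assumes "cbasis V bs" "(\<Sum>i<length bs. cscale (u i) (bs ! i)) = (\<Sum>i<length bs. cscale (w i) (bs ! i))"
    "i < length bs"
  shows "u i = w i"
proof -
  have zero: "(\<Sum>i<length bs. cscale (u i - w i) (bs ! i)) = 0"
    using assms(2) sum_cscale_diff[of u "\<lambda>i. bs ! i" "{..<length bs}" w] by simp
  have all: "\<forall>c. (\<Sum>i<length bs. cscale (c i) (bs ! i)) = 0 \<longrightarrow> (\<forall>i<length bs. c i = 0)"
    using assms(1) unfolding cbasis_def by blast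
  have "u i - w i = 0" using all[rule_format, of "\<lambda>i. u i - w i", OF zero] assms(3) by simp
  then show ?thesis by simp
qed

lemma lincomb:
  "(\<Sum>j\<in>J. cscale (a j) (\<Sum>k\<in>K. cscale (b j k) (x k))) = (\<Sum>k\<in>K. cscale (\<Sum>j\<in>J. a j * b j k) (x k))"
  apply (simp add: vec_eq_iff sum_distrib_left sum_distrib_right mult.assoc)
  apply (intro allI)
  apply (rule sum.swap)
  done

definition glin :: "(complex^'a::finite^'a \<Rightarrow> complex^'a^'a) \<Rightarrow> bool" where
  "glin L \<longleftrightarrow> (\<forall>x y. L (x + y) = L x + L y) \<and> (\<forall>c x. L (cscale c x) = cscale c (L x))"

lemma glin_sum:
  assumes "glin L"
  shows "L (\<Sum>j\<in>J. cscale (a j) (x j)) = (\<Sum>j\<in>J. cscale (a j) (L (x j)))"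
proof -
  have L0: "L 0 = 0" using assms unfolding glin_def by (metis cscale_zero_left)
  show ?thesis
    by (induct J rule: infinite_finite_induct) (use assms L0 in \<open>auto simp: glin_def\<close>)
qed

lemma trace_indep:
  assumes bs: "cbasis V bs" and bs': "cbasis V bs'" and L: "glin L"
    and c: "\<forall>i<length bs. L (bs ! i) = (\<Sum>j<length bs. cscale (c i j) (bs ! j))"
    and c': "\<forall>i<length bs'. L (bs' ! i) = (\<Sum>j<length bs'. cscale (c' i j) (bs' ! j))"
  shows "(\<Sum>i<length bs. c i i) = (\<Sum>i<length bs'. c' i i)"
proof -
  define n where "n = length bs"
  define n' where "n' = length bs'"
  define P where "P i j = coord bs (bs' ! i) j" for i j
  define Q where "Q j k = coord bs' (bs ! j) k" for j k
  have inV: "bs ! i \<in> V" if "i < n" for i using cbasis_nth[OF bs] that unfolding n_def by auto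
  have inV': "bs' ! i \<in> V" if "i < n'" for i using cbasis_nth[OF bs'] that unfolding n'_def by auto
  have P: "bs' ! i = (\<Sum>j<n. cscale (P i j) (bs ! j))" if "i < n'" for i
    unfolding P_def n_def using coord_eq[OF bs inV'[OF that]] .
  have Q: "bs ! j = (\<Sum>k<n'. cscale (Q j k) (bs' ! k))" if "j < n" for j
    unfolding Q_def n'_def using coord_eq[OF bs' inV[OF that]] .
  have QP: "(\<Sum>k<n'. Q l k * P k j) = (if l = j then 1 else 0)" if "l < n" "j < n" for l j
  proof -
    have "(\<Sum>j<n. cscale (\<Sum>k<n'. Q l k * P k j) (bs ! j)) = (\<Sum>k<n'. cscale (Q l k) (\<Sum>j<n. cscale (P k j) (bs ! j)))"
      by (simp add: lincomb)
    also have "\<dots> = (\<Sum>k<n'. cscale (Q l k) (bs' ! k))" by (rule sum.cong) (auto simp: P)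
    also have "\<dots> = bs ! l" using Q[OF that(1)] by simp
    also have "\<dots> = (\<Sum>j<n. cscale (if l = j then 1 else 0) (bs ! j))"
      using that(1) by (simp add: if_distrib[of "\<lambda>c. cscale c _"] sum.delta cong: if_cong)
    finally have eq: "(\<Sum>j<length bs. cscale (\<Sum>k<n'. Q l k * P k j) (bs ! j)) = (\<Sum>j<length bs. cscale (if l = j then 1 else 0) (bs ! j))"
      unfolding n_def .
    show ?thesis using coord_unique[OF bs eq] that(2) unfolding n_def by simp
  qed
  have c'eq: "c' i k = (\<Sum>l<n. (\<Sum>j<n. P i j * c j l) * Q l k)" if "i < n'" "k < n'" for i k
  proof -
    have "(\<Sum>k<n'. cscale (c' i k) (bs' ! k)) = L (bs' ! i)" using c' that unfolding n'_def by simp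
    also have "\<dots> = (\<Sum>j<n. cscale (P i j) (L (bs ! j)))" using P[OF that(1)] glin_sum[OF L] by simp
    also have "\<dots> = (\<Sum>j<n. cscale (P i j) (\<Sum>l<n. cscale (c j l) (bs ! l)))"
      using c unfolding n_def by simp
    also have "\<dots> = (\<Sum>l<n. cscale (\<Sum>j<n. P i j * c j l) (bs ! l))" by (simp add: lincomb)
    also have "\<dots> = (\<Sum>l<n. cscale (\<Sum>j<n. P i j * c j l) (\<Sum>k<n'. cscale (Q l k) (bs' ! k)))"
      by (rule sum.cong) (auto simp: Q[symmetric])
    also have "\<dots> = (\<Sum>k<n'. cscale (\<Sum>l<n. (\<Sum>j<n. P i j * c j l) * Q l k) (bs' ! k))"
      by (simp add: lincomb)
    finally have eq: "(\<Sum>k<length bs'. cscale (c' i k) (bs' ! k)) = (\<Sum>k<length bs'. cscale (\<Sum>l<n. (\<Sum>j<n. P i j * c j l) * Q l k) (bs' ! k))"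
      unfolding n'_def .
    show ?thesis using coord_unique[OF bs' eq] that(2) unfolding n'_def by simp
  qed
  have "(\<Sum>i<n'. c' i i) = (\<Sum>i<n'. \<Sum>l<n. \<Sum>j<n. P i j * c j l * Q l i)"
    by (rule sum.cong) (auto simp: c'eq sum_distrib_right)
  also have "\<dots> = (\<Sum>l<n. \<Sum>i<n'. \<Sum>j<n. P i j * c j l * Q l i)"
    by (rule sum.swap)
  also have "\<dots> = (\<Sum>l<n. \<Sum>j<n. \<Sum>i<n'. P i j * c j l * Q l i)"
    by (rule sum.cong[OF refl], rule sum.swap)
  also have "\<dots> = (\<Sum>l<n. \<Sum>j<n. c j l * (\<Sum>i<n'. Q l i * P i j))"
    by (simp add: sum_distrib_left mult_ac)
  also have "\<dots> = (\<Sum>l<n. \<Sum>j<n. c j l * (if l = j then 1 else 0))"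
    by (intro sum.cong) (auto simp: QP)
  also have "\<dots> = (\<Sum>l<n. c l l)"
    by (simp add: if_distrib[of "\<lambda>x. _ * x"] sum.delta cong: if_cong)
  finally show ?thesis unfolding n_def n'_def by simp
qed


lemma lin_trace_eq:
  assumes bs: "cbasis V bs" and L: "glin L"
    and c: "\<forall>i<length bs. L (bs ! i) = (\<Sum>j<length bs. cscale (c i j) (bs ! j))"
  shows "lin_trace V L = (\<Sum>i<length bs. c i i)"
  unfolding lin_trace_def
proof (rule the_equality)
  show "\<forall>bs' c'. cbasis V bs' \<and> (\<forall>i<length bs'. L (bs' ! i) = (\<Sum>j<length bs'. cscale (c' i j) (bs' ! j))) \<longrightarrow>
      (\<Sum>i<length bs. c i i) = (\<Sum>i<length bs'. c' i i)"
    using trace_indep[OF bs _ L c] by blast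
  fix t assume "\<forall>bs c. cbasis V bs \<and> (\<forall>i<length bs. L (bs ! i) = (\<Sum>j<length bs. cscale (c i j) (bs ! j))) \<longrightarrow>
      t = (\<Sum>i<length bs. c i i)"
  then show "t = (\<Sum>i<length bs. c i i)" using bs c by blast
qed

definition subalg :: "(complex^'a::finite^'a) set \<Rightarrow> bool" where
  "subalg V \<longleftrightarrow> subsp V \<and> (\<forall>x\<in>V. \<forall>y\<in>V. x ** y \<in> V)"

lemma glin_lmult: "glin (\<lambda>m. n ** m)"
  unfolding glin_def by (simp add: matrix_add_ldistrib cscale_mult_right)

lemma lmult_coord:
  assumes V: "subalg V" and bs: "cbasis V bs" and n: "n \<in> V" and i: "i < length bs"
  shows "n ** bs ! i = (\<Sum>j<length bs. cscale (coord bs (n ** bs ! i) j) (bs ! j))"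
proof -
  have "n ** bs ! i \<in> V" using V n cbasis_nth[OF bs i] unfolding subalg_def by blast
  then show ?thesis by (rule coord_eq[OF bs])
qed

lemma tr_formula:
  assumes V: "subalg V" and bs: "cbasis V bs" and n: "n \<in> V"
  shows "lin_trace V (\<lambda>m. n ** m) = (\<Sum>i<length bs. coord bs (n ** bs ! i) i)"
  by (rule lin_trace_eq[OF bs glin_lmult]) (intro allI impI lmult_coord[OF V bs n])

lemma tr_add:
  assumes V: "subalg V" and n: "n \<in> V" and n': "n' \<in> V"
  shows "lin_trace V (\<lambda>m. (n + n') ** m) = lin_trace V (\<lambda>m. n ** m) + lin_trace V (\<lambda>m. n' ** m)"
proof -
  obtain bs where bs: "cbasis V bs" using cbasis_exists V unfolding subalg_def by blast
  have "\<forall>i<length bs. (n + n') ** bs ! i = (\<Sum>j<length bs. cscale (coord bs (n ** bs ! i) j + coord bs (n' ** bs ! i) j) (bs ! j))"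
  proof (intro allI impI)
    fix i assume i: "i < length bs"
    have "(n + n') ** bs ! i = n ** bs ! i + n' ** bs ! i" by (simp add: matrix_add_rdistrib')
    also have "\<dots> = (\<Sum>j<length bs. cscale (coord bs (n ** bs ! i) j) (bs ! j)) + (\<Sum>j<length bs. cscale (coord bs (n' ** bs ! i) j) (bs ! j))"
      using lmult_coord[OF V bs n i] lmult_coord[OF V bs n' i] by argo
    finally show "(n + n') ** bs ! i = (\<Sum>j<length bs. cscale (coord bs (n ** bs ! i) j + coord bs (n' ** bs ! i) j) (bs ! j))"
      by (simp add: cscale_add_left sum.distrib)
  qed
  from lin_trace_eq[OF bs glin_lmult this] show ?thesis
    using tr_formula[OF V bs n] tr_formula[OF V bs n'] by (simp add: sum.distrib)
qed

lemma tr_scale: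
  assumes V: "subalg V" and n: "n \<in> V"
  shows "lin_trace V (\<lambda>m. cscale c n ** m) = c * lin_trace V (\<lambda>m. n ** m)"
proof -
  obtain bs where bs: "cbasis V bs" using cbasis_exists V unfolding subalg_def by blast
  have "\<forall>i<length bs. cscale c n ** bs ! i = (\<Sum>j<length bs. cscale (c * coord bs (n ** bs ! i) j) (bs ! j))"
  proof (intro allI impI)
    fix i assume i: "i < length bs"
    have "cscale c n ** bs ! i = cscale c (n ** bs ! i)" by (simp add: cscale_mult_left)
    also have "\<dots> = cscale c (\<Sum>j<length bs. cscale (coord bs (n ** bs ! i) j) (bs ! j))"
      using lmult_coord[OF V bs n i] by argo
    finally show "cscale c n ** bs ! i = (\<Sum>j<length bs. cscale (c * coord bs (n ** bs ! i) j) (bs ! j))"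
      by (simp add: cscale_sum)
  qed
  from lin_trace_eq[OF bs glin_lmult this] show ?thesis
    using tr_formula[OF V bs n] by (simp add: sum_distrib_left)
qed

lemma tr_comm:
  assumes V: "subalg V" and a: "a \<in> V" and b: "b \<in> V"
  shows "lin_trace V (\<lambda>m. (a ** b) ** m) = lin_trace V (\<lambda>m. (b ** a) ** m)"
proof -
  obtain bs where bs: "cbasis V bs" using cbasis_exists V unfolding subalg_def by blast
  define ca where "ca i j = coord bs (a ** bs ! i) j" for i j
  define cb where "cb i j = coord bs (b ** bs ! i) j" for i j
  have A: "a ** bs ! i = (\<Sum>j<length bs. cscale (ca i j) (bs ! j))" if "i < length bs" for i
    using lmult_coord[OF V bs a that] unfolding ca_def .
  have B: "b ** bs ! i = (\<Sum>j<length bs. cscale (cb i j) (bs ! j))" if "i < length bs" for i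
    using lmult_coord[OF V bs b that] unfolding cb_def .
  have AB: "\<forall>i<length bs. (a ** b) ** bs ! i = (\<Sum>j<length bs. cscale (\<Sum>k<length bs. cb i k * ca k j) (bs ! j))"
  proof (intro allI impI)
    fix i assume i: "i < length bs"
    have "(a ** b) ** bs ! i = a ** (\<Sum>k<length bs. cscale (cb i k) (bs ! k))"
      using B[OF i] by (simp add: matrix_mul_assoc[symmetric])
    also have "\<dots> = (\<Sum>k<length bs. cscale (cb i k) (a ** bs ! k))"
      by (simp add: matrix_sum_right cscale_mult_right)
    also have "\<dots> = (\<Sum>k<length bs. cscale (cb i k) (\<Sum>j<length bs. cscale (ca k j) (bs ! j)))"
      by (rule sum.cong) (auto simp: A)
    also have "\<dots> = (\<Sum>j<length bs. cscale (\<Sum>k<length bs. cb i k * ca k j) (bs ! j))"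
      by (rule lincomb)
    finally show "(a ** b) ** bs ! i = (\<Sum>j<length bs. cscale (\<Sum>k<length bs. cb i k * ca k j) (bs ! j))" .
  qed
  have BA: "\<forall>i<length bs. (b ** a) ** bs ! i = (\<Sum>j<length bs. cscale (\<Sum>k<length bs. ca i k * cb k j) (bs ! j))"
  proof (intro allI impI)
    fix i assume i: "i < length bs"
    have "(b ** a) ** bs ! i = b ** (\<Sum>k<length bs. cscale (ca i k) (bs ! k))"
      using A[OF i] by (simp add: matrix_mul_assoc[symmetric])
    also have "\<dots> = (\<Sum>k<length bs. cscale (ca i k) (b ** bs ! k))"
      by (simp add: matrix_sum_right cscale_mult_right)
    also have "\<dots> = (\<Sum>k<length bs. cscale (ca i k) (\<Sum>j<length bs. cscale (cb k j) (bs ! j)))"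
      by (rule sum.cong) (auto simp: B)
    also have "\<dots> = (\<Sum>j<length bs. cscale (\<Sum>k<length bs. ca i k * cb k j) (bs ! j))"
      by (rule lincomb)
    finally show "(b ** a) ** bs ! i = (\<Sum>j<length bs. cscale (\<Sum>k<length bs. ca i k * cb k j) (bs ! j))" .
  qed
  have "(\<Sum>i<length bs. \<Sum>k<length bs. cb i k * ca k i) = (\<Sum>k<length bs. \<Sum>i<length bs. cb i k * ca k i)"
    by (rule sum.swap)
  also have "\<dots> = (\<Sum>i<length bs. \<Sum>k<length bs. ca i k * cb k i)"
    by (simp add: mult.commute)
  finally show ?thesis
    using lin_trace_eq[OF bs glin_lmult AB] lin_trace_eq[OF bs glin_lmult BA] by simp
qed

lemma ts_add_rep:
  fixes a b c d :: "nat \<Rightarrow> _"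
  shows "(\<Sum>i<k. kron (a i) (b i)) + (\<Sum>i<l. kron (c i) (d i)) =
    (\<Sum>p\<in>Inl ` {..<k} \<union> Inr ` {..<l}. kron (case_sum a c p) (case_sum b d p))"
  by (subst sum.union_disjoint) (auto simp: sum.reindex)

lemma tem_add:
  assumes A: "subsp A" and B: "subsp B" and h: "bilm A B h"
    and X: "X \<in> tensor_space A B" and Y: "Y \<in> tensor_space A B"
  shows "tensor_ext A B h (X + Y) = tensor_ext A B h X + tensor_ext A B h Y"
proof -
  obtain k a b where ab: "\<forall>i<(k::nat). a i \<in> A \<and> b i \<in> B" "X = (\<Sum>i<k. kron (a i) (b i))"
    using X by (rule tensor_spaceE)
  obtain l c d where cd: "\<forall>i<(l::nat). c i \<in> A \<and> d i \<in> B" "Y = (\<Sum>i<l. kron (c i) (d i))"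
    using Y by (rule tensor_spaceE)
  let ?I = "Inl ` {..<k} \<union> Inr ` {..<l}"
  have mem: "\<forall>p\<in>?I. case_sum a c p \<in> A \<and> case_sum b d p \<in> B" using ab cd by auto
  have "tensor_ext A B h (X + Y) = (\<Sum>p\<in>?I. h (case_sum a c p) (case_sum b d p))"
    unfolding ab(2) cd(2) ts_add_rep by (rule tem[OF A B h _ mem]) simp
  also have "\<dots> = (\<Sum>i<k. h (a i) (b i)) + (\<Sum>i<l. h (c i) (d i))"
    by (subst sum.union_disjoint) (auto simp: sum.reindex)
  also have "\<dots> = tensor_ext A B h X + tensor_ext A B h Y"
    using tem[OF A B h _ , of "{..<k}" a b] tem[OF A B h _ , of "{..<l}" c d] ab cd by simp
  finally show ?thesis .
qed

lemma tem_scale: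
  assumes A: "subsp A" and B: "subsp B" and h: "bilm A B h"
    and X: "X \<in> tensor_space A B"
  shows "tensor_ext A B h (cscale c X) = cscale c (tensor_ext A B h X)"
proof -
  obtain k a b where ab: "\<forall>i<(k::nat). a i \<in> A \<and> b i \<in> B" "X = (\<Sum>i<k. kron (a i) (b i))"
    using X by (rule tensor_spaceE)
  have mem: "\<forall>i\<in>{..<k}. cscale c (a i) \<in> A \<and> b i \<in> B" using ab subspD(3)[OF A] by auto
  have "cscale c X = (\<Sum>i<k. kron (cscale c (a i)) (b i))"
    unfolding ab(2) by (simp add: cscale_sum kron_cscale_left)
  then have "tensor_ext A B h (cscale c X) = (\<Sum>i<k. h (cscale c (a i)) (b i))"
    using tem[OF A B h _ mem] by simp
  also have "\<dots> = (\<Sum>i<k. cscale c (h (a i) (b i)))"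
    using h ab unfolding bilm_def by (intro sum.cong) auto
  also have "\<dots> = cscale c (tensor_ext A B h X)"
    using tem[OF A B h _ , of "{..<k}" a b] ab by (simp add: cscale_sum)
  finally show ?thesis .
qed

lemma bilm_mult:
  assumes "clinear_on A f" "clinear_on B g"
  shows "bilm A B (\<lambda>a b. f a ** g b)"
  using assms unfolding bilm_def clinear_on_def
  by (simp add: matrix_add_ldistrib matrix_add_rdistrib' cscale_mult_left cscale_mult_right)

lemma bilm_kron:
  assumes "clinear_on A f" "clinear_on B g"
  shows "bilm A B (\<lambda>a b. kron (f a) (g b))"
  using assms unfolding bilm_def clinear_on_def
  by (simp add: kron_add_left kron_add_right kron_cscale_left kron_cscale_right)

lemma bilm_scale_r:
  assumes "clinear_on A f" "cfunctional_on B \<phi>"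
  shows "bilm A B (\<lambda>a b. cscale (\<phi> b) (f a))"
  using assms unfolding bilm_def clinear_on_def cfunctional_on_def
  by (simp add: cscale_add cscale_add_left mult.commute)

lemma bilm_scale_l:
  assumes "cfunctional_on A \<phi>" "clinear_on B f"
  shows "bilm A B (\<lambda>a b. cscale (\<phi> a) (f b))"
  using assms unfolding bilm_def clinear_on_def cfunctional_on_def
  by (simp add: cscale_add cscale_add_left mult.commute)

lemma bil_prod:
  assumes "cfunctional_on A \<phi>" "cfunctional_on B \<psi>"
  shows "bil A B (\<lambda>a b. \<phi> a * \<psi> b)"
  using assms unfolding bil_def cfunctional_on_def
  by (simp add: ring_distribs)

lemma clinear_on_id: "clinear_on A (\<lambda>x. x)"
  unfolding clinear_on_def by simp

lemma clinear_on_mono: "clinear_on A f \<Longrightarrow> B \<subseteq> A \<Longrightarrow> clinear_on B f"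
  unfolding clinear_on_def by blast

lemma cfunctional_on_mono: "cfunctional_on A f \<Longrightarrow> B \<subseteq> A \<Longrightarrow> cfunctional_on B f"
  unfolding cfunctional_on_def by blast

lemma ts_rep_mult_left:
  "kron u v ** (\<Sum>i\<in>I. kron (a i) (b i)) = (\<Sum>i\<in>I. kron (u ** a i) (v ** b i))"
  by (simp add: matrix_sum_right kron_mult)

lemma ts_rep_mult_right:
  "(\<Sum>i\<in>I. kron (a i) (b i)) ** kron u v = (\<Sum>i\<in>I. kron (a i ** u) (b i ** v))"
  by (simp add: matrix_sum_left kron_mult)

lemma ts_intro:
  fixes a b :: "nat \<Rightarrow> _"
  shows "(\<forall>i<k. a i \<in> A \<and> b i \<in> B) \<Longrightarrow> (\<Sum>i<k. kron (a i) (b i)) \<in> tensor_space A B"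
  unfolding tensor_space_def by blast

locale base =
  fixes M :: "(complex^'n::finite^'n) set"
    and \<Delta> :: "complex^'n^'n \<Rightarrow> complex^('n\<times>'n)^('n\<times>'n)"
    and S :: "complex^'n^'n \<Rightarrow> complex^'n^'n"
  assumes G: "gen_coinv_bialg M \<Delta> S"
    and C: "counital M \<Delta> S"
begin

abbreviation "e \<equiv> unit_e \<Delta>"
abbreviation "Nt \<equiv> N_t M \<Delta>"
abbreviation "Ns \<equiv> N_s M \<Delta>"
abbreviation "et \<equiv> eps_t M \<Delta> S"
abbreviation "es \<equiv> eps_s M \<Delta> S"
abbreviation "SS \<equiv> tensor_ext M M (\<lambda>a b. kron (S a) (S b))"

lemma M_star: "is_star_subalg M" using G unfolding gen_coinv_bialg_def by blast
lemma M_sub: "subsp M" using M_star unfolding is_star_subalg_def subsp_def by blast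
lemma M_alg: "subalg M" using M_star M_sub unfolding is_star_subalg_def subalg_def by blast
lemma one_M[simp]: "mat 1 \<in> M" using M_star unfolding is_star_subalg_def by blast
lemma zero_M[simp]: "0 \<in> M" using M_sub unfolding subsp_def by blast
lemma M_mult: "x \<in> M \<Longrightarrow> y \<in> M \<Longrightarrow> x ** y \<in> M" using M_star unfolding is_star_subalg_def by blast
lemma M_add: "x \<in> M \<Longrightarrow> y \<in> M \<Longrightarrow> x + y \<in> M" using M_star unfolding is_star_subalg_def by blast
lemma M_scale: "x \<in> M \<Longrightarrow> cscale c x \<in> M" using M_star unfolding is_star_subalg_def by blast
lemma M_adj: "x \<in> M \<Longrightarrow> adj x \<in> M" using M_star unfolding is_star_subalg_def by blast

lemma D_lin: "clinear_on M \<Delta>" using G unfolding gen_coinv_bialg_def by blast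
lemma D_add: "x \<in> M \<Longrightarrow> y \<in> M \<Longrightarrow> \<Delta> (x + y) = \<Delta> x + \<Delta> y" using D_lin unfolding clinear_on_def by blast
lemma D_scale: "x \<in> M \<Longrightarrow> \<Delta> (cscale c x) = cscale c (\<Delta> x)" using D_lin unfolding clinear_on_def by blast
lemma D_zero: "\<Delta> 0 = 0" using D_scale[of 0 0] by simp
lemma D_ts: "x \<in> M \<Longrightarrow> \<Delta> x \<in> tensor_space M M" using G unfolding gen_coinv_bialg_def by blast
lemma D_mult: "x \<in> M \<Longrightarrow> y \<in> M \<Longrightarrow> \<Delta> (x ** y) = \<Delta> x ** \<Delta> y" using G unfolding gen_coinv_bialg_def by blast
lemma D_adj: "x \<in> M \<Longrightarrow> \<Delta> (adj x) = adj (\<Delta> x)" using G unfolding gen_coinv_bialg_def by blast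

lemma S_lin: "clinear_on M S" using G unfolding gen_coinv_bialg_def by blast
lemma S_add: "x \<in> M \<Longrightarrow> y \<in> M \<Longrightarrow> S (x + y) = S x + S y" using S_lin unfolding clinear_on_def by blast
lemma S_scale: "x \<in> M \<Longrightarrow> S (cscale c x) = cscale c (S x)" using S_lin unfolding clinear_on_def by blast
lemma S_M: "x \<in> M \<Longrightarrow> S x \<in> M" using G unfolding gen_coinv_bialg_def bij_betw_def by blast
lemma S_one[simp]: "S (mat 1) = mat 1" using G unfolding gen_coinv_bialg_def by blast
lemma S_mult: "x \<in> M \<Longrightarrow> y \<in> M \<Longrightarrow> S (x ** y) = S y ** S x" using G unfolding gen_coinv_bialg_def by blast
lemma S_adj: "x \<in> M \<Longrightarrow> S (adj x) = adj (S x)" using G unfolding gen_coinv_bialg_def by blast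
lemma S_S: "x \<in> M \<Longrightarrow> S (S x) = x" using G unfolding gen_coinv_bialg_def by blast
lemma S_flip: "x \<in> M \<Longrightarrow> SS (\<Delta> x) = flip (\<Delta> (S x))" using G unfolding gen_coinv_bialg_def by blast

lemma S_sum: "(\<And>i. i \<in> I \<Longrightarrow> x i \<in> M) \<Longrightarrow> S (\<Sum>i\<in>I. cscale (c i) (x i)) = (\<Sum>i\<in>I. cscale (c i) (S (x i)))"
proof (induct I rule: infinite_finite_induct)
  case (infinite A) then show ?case using S_scale[of 0 0] by simp
next
  case empty then show ?case using S_scale[of 0 0] by simp
next
  case (insert a F)
  have "(\<Sum>i\<in>F. cscale (c i) (x i)) \<in> M" using insert by (intro subsp_sum[OF M_sub] M_scale) auto
  then show ?case using insert by (simp add: S_add M_scale S_scale)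
qed

lemma e_ts: "e \<in> tensor_space M M" unfolding unit_e_def by (rule D_ts) simp
lemma De_right: "x \<in> M \<Longrightarrow> \<Delta> x ** e = \<Delta> x" unfolding unit_e_def using D_mult[of x "mat 1"] by simp
lemma De_left: "x \<in> M \<Longrightarrow> e ** \<Delta> x = \<Delta> x" unfolding unit_e_def using D_mult[of "mat 1" x] by simp
lemma adj_e: "adj e = e" unfolding unit_e_def using D_adj[of "mat 1"] by simp

lemma ts_mult_left:
  assumes X: "X \<in> tensor_space M M" and u: "u \<in> M" and v: "v \<in> M"
  shows "kron u v ** X \<in> tensor_space M M"
proof -
  obtain k a b where ab: "\<forall>i<(k::nat). a i \<in> M \<and> b i \<in> M" "X = (\<Sum>i<k. kron (a i) (b i))"
    using X by (rule tensor_spaceE)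
  show ?thesis unfolding ab(2) ts_rep_mult_left
    by (rule ts_intro) (use ab(1) u v M_mult in blast)
qed

lemma ts_mult_right:
  assumes X: "X \<in> tensor_space M M" and u: "u \<in> M" and v: "v \<in> M"
  shows "X ** kron u v \<in> tensor_space M M"
proof -
  obtain k a b where ab: "\<forall>i<(k::nat). a i \<in> M \<and> b i \<in> M" "X = (\<Sum>i<k. kron (a i) (b i))"
    using X by (rule tensor_spaceE)
  show ?thesis unfolding ab(2) ts_rep_mult_right
    by (rule ts_intro) (use ab(1) u v M_mult in blast)
qed

lemma bilm_SS: "bilm M M (\<lambda>a b. kron (S a) (S b))"
  by (rule bilm_kron[OF S_lin S_lin])

lemma SS_rep: "\<forall>i\<in>I. a i \<in> M \<and> b i \<in> M \<Longrightarrow> finite I \<Longrightarrow>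
   SS (\<Sum>i\<in>I. kron (a i) (b i)) = (\<Sum>i\<in>I. kron (S (a i)) (S (b i)))"
  by (rule tem[OF M_sub M_sub bilm_SS]) auto

lemma SS_mult_left:
  assumes X: "X \<in> tensor_space M M" and u: "u \<in> M" and v: "v \<in> M"
  shows "SS (kron u v ** X) = SS X ** kron (S u) (S v)"
proof -
  obtain k a b where ab: "\<forall>i<(k::nat). a i \<in> M \<and> b i \<in> M" "X = (\<Sum>i<k. kron (a i) (b i))"
    using X by (rule tensor_spaceE)
  have "SS (kron u v ** X) = (\<Sum>i<k. kron (S (u ** a i)) (S (v ** b i)))"
    unfolding ab(2) ts_rep_mult_left using ab(1) u v M_mult by (intro SS_rep) auto
  also have "\<dots> = (\<Sum>i<k. kron (S (a i) ** S u) (S (b i) ** S v))"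
    using ab(1) u v by (intro sum.cong) (auto simp: S_mult)
  also have "\<dots> = SS X ** kron (S u) (S v)"
    unfolding ab(2) using ab(1) by (subst SS_rep) (auto simp: ts_rep_mult_right)
  finally show ?thesis .
qed

lemma SS_mult_right:
  assumes X: "X \<in> tensor_space M M" and u: "u \<in> M" and v: "v \<in> M"
  shows "SS (X ** kron u v) = kron (S u) (S v) ** SS X"
proof -
  obtain k a b where ab: "\<forall>i<(k::nat). a i \<in> M \<and> b i \<in> M" "X = (\<Sum>i<k. kron (a i) (b i))"
    using X by (rule tensor_spaceE)
  have "SS (X ** kron u v) = (\<Sum>i<k. kron (S (a i ** u)) (S (b i ** v)))"
    unfolding ab(2) ts_rep_mult_right using ab(1) u v M_mult by (intro SS_rep) auto
  also have "\<dots> = (\<Sum>i<k. kron (S u ** S (a i)) (S v ** S (b i)))"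
    using ab(1) u v by (intro sum.cong) (auto simp: S_mult)
  also have "\<dots> = kron (S u) (S v) ** SS X"
    unfolding ab(2) using ab(1) by (subst SS_rep) (auto simp: ts_rep_mult_left)
  finally show ?thesis .
qed

lemma SS_e: "SS e = flip e" unfolding unit_e_def using S_flip[of "mat 1"] by simp

lemma Nt_M: "x \<in> Nt \<Longrightarrow> x \<in> M" unfolding N_t_def by blast
lemma Ns_M: "x \<in> Ns \<Longrightarrow> x \<in> M" unfolding N_s_def by blast
lemma NtD1: "x \<in> Nt \<Longrightarrow> \<Delta> x = e ** kron x (mat 1)" unfolding N_t_def by blast
lemma NtD2: "x \<in> Nt \<Longrightarrow> \<Delta> x = kron x (mat 1) ** e" unfolding N_t_def by blast
lemma NsD1: "x \<in> Ns \<Longrightarrow> \<Delta> x = e ** kron (mat 1) x" unfolding N_s_def by blast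
lemma NsD2: "x \<in> Ns \<Longrightarrow> \<Delta> x = kron (mat 1) x ** e" unfolding N_s_def by blast

lemma one_Nt[simp]: "mat 1 \<in> Nt"
  unfolding N_t_def unit_e_def by (simp add: kron_one)
lemma one_Ns[simp]: "mat 1 \<in> Ns"
  unfolding N_s_def unit_e_def by (simp add: kron_one)

lemma Nt_sub: "subsp Nt"
  unfolding subsp_def N_t_def
  by (auto simp: D_zero M_add M_scale D_add D_scale matrix_add_ldistrib matrix_add_rdistrib' kron_add_left cscale_mult_left cscale_mult_right kron_cscale_left)

lemma Ns_sub: "subsp Ns"
  unfolding subsp_def N_s_def
  by (auto simp: D_zero M_add M_scale D_add D_scale matrix_add_ldistrib matrix_add_rdistrib' kron_add_right cscale_mult_left cscale_mult_right kron_cscale_right)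

lemma Nt_mult: assumes x: "x \<in> Nt" and y: "y \<in> Nt" shows "x ** y \<in> Nt"
proof -
  have xy: "x ** y \<in> M" using x y Nt_M M_mult by blast
  have "\<Delta> (x ** y) = (kron x (mat 1) ** e) ** (e ** kron y (mat 1))"
    using D_mult[OF Nt_M[OF x] Nt_M[OF y]] NtD1[OF y] NtD2[OF x] by simp
  also have "\<dots> = kron x (mat 1) ** (e ** e) ** kron y (mat 1)" by (simp add: matrix_mul_assoc)
  also have "e ** e = e" using De_left[of "mat 1"] unfolding unit_e_def by simp
  finally have 1: "\<Delta> (x ** y) = kron x (mat 1) ** e ** kron y (mat 1)" .
  have 2: "kron x (mat 1) ** e = e ** kron x (mat 1)" using NtD1[OF x] NtD2[OF x] by simp
  have 3: "e ** kron y (mat 1) = kron y (mat 1) ** e" using NtD1[OF y] NtD2[OF y] by simp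
  have "\<Delta> (x ** y) = e ** kron (x ** y) (mat 1)"
    using 1 2 by (simp add: matrix_mul_assoc[symmetric] kron_mult)
  moreover have "\<Delta> (x ** y) = kron (x ** y) (mat 1) ** e"
  proof -
    have "\<Delta> (x ** y) = kron x (mat 1) ** (e ** kron y (mat 1))" using 1 by (simp add: matrix_mul_assoc)
    also have "\<dots> = kron x (mat 1) ** (kron y (mat 1) ** e)" using 3 by simp
    also have "\<dots> = kron (x ** y) (mat 1) ** e" by (simp add: matrix_mul_assoc kron_mult)
    finally show ?thesis .
  qed
  ultimately show ?thesis using xy unfolding N_t_def by blast
qed

lemma Ns_mult: assumes x: "x \<in> Ns" and y: "y \<in> Ns" shows "x ** y \<in> Ns"
proof -
  have xy: "x ** y \<in> M" using x y Ns_M M_mult by blast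
  have "\<Delta> (x ** y) = (kron (mat 1) x ** e) ** (e ** kron (mat 1) y)"
    using D_mult[OF Ns_M[OF x] Ns_M[OF y]] NsD1[OF y] NsD2[OF x] by simp
  also have "\<dots> = kron (mat 1) x ** (e ** e) ** kron (mat 1) y" by (simp add: matrix_mul_assoc)
  also have "e ** e = e" using De_left[of "mat 1"] unfolding unit_e_def by simp
  finally have 1: "\<Delta> (x ** y) = kron (mat 1) x ** e ** kron (mat 1) y" .
  have 2: "kron (mat 1) x ** e = e ** kron (mat 1) x" using NsD1[OF x] NsD2[OF x] by simp
  have 3: "e ** kron (mat 1) y = kron (mat 1) y ** e" using NsD1[OF y] NsD2[OF y] by simp
  have "\<Delta> (x ** y) = e ** kron (mat 1) (x ** y)"
    using 1 2 by (simp add: matrix_mul_assoc[symmetric] kron_mult)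
  moreover have "\<Delta> (x ** y) = kron (mat 1) (x ** y) ** e"
  proof -
    have "\<Delta> (x ** y) = kron (mat 1) x ** (e ** kron (mat 1) y)" using 1 by (simp add: matrix_mul_assoc)
    also have "\<dots> = kron (mat 1) x ** (kron (mat 1) y ** e)" using 3 by simp
    also have "\<dots> = kron (mat 1) (x ** y) ** e" by (simp add: matrix_mul_assoc kron_mult)
    finally show ?thesis .
  qed
  ultimately show ?thesis using xy unfolding N_s_def by blast
qed

lemma Nt_alg: "subalg Nt" using Nt_sub Nt_mult unfolding subalg_def by blast
lemma Ns_alg: "subalg Ns" using Ns_sub Ns_mult unfolding subalg_def by blast

lemma Nt_adj: assumes x: "x \<in> Nt" shows "adj x \<in> Nt"
proof -
  have "\<Delta> (adj x) = adj (\<Delta> x)" using D_adj Nt_M x by blast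
  then have "\<Delta> (adj x) = adj (e ** kron x (mat 1))" "\<Delta> (adj x) = adj (kron x (mat 1) ** e)"
    using NtD1[OF x] NtD2[OF x] by simp_all
  then have "\<Delta> (adj x) = kron (adj x) (mat 1) ** e" "\<Delta> (adj x) = e ** kron (adj x) (mat 1)"
    by (simp_all add: adj_mult adj_kron adj_e)
  then show ?thesis using M_adj Nt_M x unfolding N_t_def by blast
qed

lemma Ns_adj: assumes x: "x \<in> Ns" shows "adj x \<in> Ns"
proof -
  have "\<Delta> (adj x) = adj (\<Delta> x)" using D_adj Ns_M x by blast
  then have "\<Delta> (adj x) = adj (e ** kron (mat 1) x)" "\<Delta> (adj x) = adj (kron (mat 1) x ** e)"
    using NsD1[OF x] NsD2[OF x] by simp_all
  then have "\<Delta> (adj x) = kron (mat 1) (adj x) ** e" "\<Delta> (adj x) = e ** kron (mat 1) (adj x)"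
    by (simp_all add: adj_mult adj_kron adj_e)
  then show ?thesis using M_adj Ns_M x unfolding N_s_def by blast
qed

lemma S_Nt: assumes z: "z \<in> Nt" shows "S z \<in> Ns"
proof -
  have zM: "z \<in> M" using Nt_M z .
  have "flip (\<Delta> (S z)) = SS (\<Delta> z)" using S_flip zM by simp
  also have "\<dots> = SS (e ** kron z (mat 1))" using NtD1[OF z] by simp
  also have "\<dots> = kron (S z) (mat 1) ** flip e" using SS_mult_right[OF e_ts zM one_M] SS_e by simp
  finally have "\<Delta> (S z) = flip (kron (S z) (mat 1) ** flip e)" by (metis flip_flip)
  then have 1: "\<Delta> (S z) = kron (mat 1) (S z) ** e" by (simp add: flip_mult)
  have "flip (\<Delta> (S z)) = SS (\<Delta> z)" using S_flip zM by simp
  also have "\<dots> = SS (kron z (mat 1) ** e)" using NtD2[OF z] by simp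
  also have "\<dots> = flip e ** kron (S z) (mat 1)" using SS_mult_left[OF e_ts zM one_M] SS_e by simp
  finally have "\<Delta> (S z) = flip (flip e ** kron (S z) (mat 1))" by (metis flip_flip)
  then have 2: "\<Delta> (S z) = e ** kron (mat 1) (S z)" by (simp add: flip_mult)
  show ?thesis using 1 2 S_M zM unfolding N_s_def by blast
qed

lemma S_Ns: assumes z: "z \<in> Ns" shows "S z \<in> Nt"
proof -
  have zM: "z \<in> M" using Ns_M z .
  have "flip (\<Delta> (S z)) = SS (\<Delta> z)" using S_flip zM by simp
  also have "\<dots> = SS (e ** kron (mat 1) z)" using NsD1[OF z] by simp
  also have "\<dots> = kron (mat 1) (S z) ** flip e" using SS_mult_right[OF e_ts one_M zM] SS_e by simp
  finally have "\<Delta> (S z) = flip (kron (mat 1) (S z) ** flip e)" by (metis flip_flip)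
  then have 1: "\<Delta> (S z) = kron (S z) (mat 1) ** e" by (simp add: flip_mult)
  have "flip (\<Delta> (S z)) = SS (\<Delta> z)" using S_flip zM by simp
  also have "\<dots> = SS (kron (mat 1) z ** e)" using NsD2[OF z] by simp
  also have "\<dots> = flip e ** kron (mat 1) (S z)" using SS_mult_left[OF e_ts one_M zM] SS_e by simp
  finally have "\<Delta> (S z) = flip (flip e ** kron (mat 1) (S z))" by (metis flip_flip)
  then have 2: "\<Delta> (S z) = e ** kron (S z) (mat 1)" by (simp add: flip_mult)
  show ?thesis using 1 2 S_M zM unfolding N_t_def by blast
qed

end

context base
begin

lemma bilm_et: "bilm M M (\<lambda>a b. a ** S b)"
  by (rule bilm_mult[OF clinear_on_id S_lin])

lemma bilm_es: "bilm M M (\<lambda>a b. S a ** b)"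
  by (rule bilm_mult[OF S_lin clinear_on_id])

lemma et_rep:
  assumes "finite I" "\<forall>i\<in>I. a i \<in> M \<and> b i \<in> M" "\<Delta> x = (\<Sum>i\<in>I. kron (a i) (b i))"
  shows "et x = (\<Sum>i\<in>I. a i ** S (b i))"
  unfolding eps_t_def assms(3) by (rule tem[OF M_sub M_sub bilm_et assms(1,2)])

lemma es_rep:
  assumes "finite I" "\<forall>i\<in>I. a i \<in> M \<and> b i \<in> M" "\<Delta> x = (\<Sum>i\<in>I. kron (a i) (b i))"
  shows "es x = (\<Sum>i\<in>I. S (a i) ** b i)"
  unfolding eps_s_def assms(3) by (rule tem[OF M_sub M_sub bilm_es assms(1,2)])

lemma et_lin: "clinear_on M et"
  unfolding clinear_on_def eps_t_def
  by (simp add: D_add D_scale tem_add[OF M_sub M_sub bilm_et D_ts D_ts]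
      tem_scale[OF M_sub M_sub bilm_et D_ts])

lemma es_lin: "clinear_on M es"
  unfolding clinear_on_def eps_s_def
  by (simp add: D_add D_scale tem_add[OF M_sub M_sub bilm_es D_ts D_ts]
      tem_scale[OF M_sub M_sub bilm_es D_ts])

lemma et_Nt: "x \<in> M \<Longrightarrow> et x \<in> Nt" using C unfolding counital_def by blast
lemma et_one: "et (mat 1) = mat 1" using C unfolding counital_def by blast
lemma C3: "w \<in> Ns \<Longrightarrow> tensor_ext M M (\<lambda>a b. kron a (et b)) (\<Delta> w) = e ** kron w (mat 1)"
  using C unfolding counital_def by blast

lemma et_M: "x \<in> M \<Longrightarrow> et x \<in> M" using et_Nt Nt_M by blast

lemma bilm_C3: "bilm M M (\<lambda>a b. kron a (et b))"
  by (rule bilm_kron[OF clinear_on_id et_lin])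

lemma D_rep_mult:
  assumes "\<Delta> x = (\<Sum>i\<in>I. kron (a i) (b i))" "\<Delta> y = (\<Sum>j\<in>J. kron (c j) (d j))" "x \<in> M" "y \<in> M"
  shows "\<Delta> (x ** y) = (\<Sum>p\<in>I \<times> J. kron (a (fst p) ** c (snd p)) (b (fst p) ** d (snd p)))"
proof -
  have "\<Delta> (x ** y) = \<Delta> x ** \<Delta> y" using D_mult assms(3,4) by blast
  also have "\<dots> = (\<Sum>i\<in>I. \<Sum>j\<in>J. kron (a i ** c j) (b i ** d j))"
    unfolding assms(1,2) by (simp add: matrix_sum_left matrix_sum_right kron_mult) (rule sum.swap)
  also have "\<dots> = (\<Sum>p\<in>I \<times> J. kron (a (fst p) ** c (snd p)) (b (fst p) ** d (snd p)))"
    by (simp add: sum.cartesian_product case_prod_beta)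
  finally show ?thesis .
qed

lemma et_Ns_mult:
  assumes w: "w \<in> Ns" and y: "y \<in> M"
  shows "et (w ** y) = et y ** S w"
proof -
  obtain k c d where cd: "\<forall>i<(k::nat). c i \<in> M \<and> d i \<in> M" "\<Delta> y = (\<Sum>i<k. kron (c i) (d i))"
    using D_ts[OF y] by (rule tensor_spaceE)
  have wM: "w \<in> M" using Ns_M w .
  have "\<Delta> (w ** y) = (kron (mat 1) w ** e) ** \<Delta> y" using D_mult[OF wM y] NsD2[OF w] by simp
  also have "\<dots> = kron (mat 1) w ** \<Delta> y" using De_left[OF y] by (simp add: matrix_mul_assoc[symmetric])
  also have "\<dots> = (\<Sum>i<k. kron (c i) (w ** d i))" unfolding cd(2) ts_rep_mult_left by simp
  finally have D: "\<Delta> (w ** y) = (\<Sum>i<k. kron (c i) (w ** d i))" .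
  have "et (w ** y) = (\<Sum>i<k. c i ** S (w ** d i))"
    by (rule et_rep[OF _ _ D]) (use cd(1) wM M_mult in auto)
  also have "\<dots> = (\<Sum>i<k. (c i ** S (d i)) ** S w)"
    using cd(1) wM by (intro sum.cong) (auto simp: S_mult matrix_mul_assoc)
  also have "\<dots> = et y ** S w"
    using et_rep[OF _ _ cd(2)] cd(1) by (simp add: matrix_sum_left)
  finally show ?thesis .
qed

lemma et_Nt_mult:
  assumes z: "z \<in> Nt" and y: "y \<in> M"
  shows "et (z ** y) = z ** et y"
proof -
  obtain k c d where cd: "\<forall>i<(k::nat). c i \<in> M \<and> d i \<in> M" "\<Delta> y = (\<Sum>i<k. kron (c i) (d i))"
    using D_ts[OF y] by (rule tensor_spaceE)
  have zM: "z \<in> M" using Nt_M z .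
  have "\<Delta> (z ** y) = (kron z (mat 1) ** e) ** \<Delta> y" using D_mult[OF zM y] NtD2[OF z] by simp
  also have "\<dots> = kron z (mat 1) ** \<Delta> y" using De_left[OF y] by (simp add: matrix_mul_assoc[symmetric])
  also have "\<dots> = (\<Sum>i<k. kron (z ** c i) (d i))" unfolding cd(2) ts_rep_mult_left by simp
  finally have D: "\<Delta> (z ** y) = (\<Sum>i<k. kron (z ** c i) (d i))" .
  have "et (z ** y) = (\<Sum>i<k. (z ** c i) ** S (d i))"
    by (rule et_rep[OF _ _ D]) (use cd(1) zM M_mult in auto)
  also have "\<dots> = z ** et y"
    using et_rep[OF _ _ cd(2)] cd(1) by (simp add: matrix_sum_right matrix_mul_assoc)
  finally show ?thesis .
qed

lemma et_Nt_id: "z \<in> Nt \<Longrightarrow> et z = z"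
  using et_Nt_mult[of z "mat 1"] et_one by simp

definition Mid :: "complex^'n^'n \<Rightarrow> complex^'n^'n \<Rightarrow> complex^'n^'n" where
  "Mid x m = tensor_ext M M (\<lambda>a b. a ** m ** S b) (\<Delta> x)"

lemma bilm_Mid: "bilm M M (\<lambda>a b. a ** m ** S b)"
proof -
  have "clinear_on M (\<lambda>a. a ** m)"
    unfolding clinear_on_def by (simp add: matrix_add_rdistrib' cscale_mult_left)
  from bilm_mult[OF this S_lin] show ?thesis .
qed

lemma Mid_rep:
  assumes "finite I" "\<forall>i\<in>I. a i \<in> M \<and> b i \<in> M" "\<Delta> x = (\<Sum>i\<in>I. kron (a i) (b i))"
  shows "Mid x m = (\<Sum>i\<in>I. a i ** m ** S (b i))"
  unfolding Mid_def assms(3) by (rule tem[OF M_sub M_sub bilm_Mid assms(1,2)])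

lemma et_mult:
  assumes x: "x \<in> M" and y: "y \<in> M"
  shows "et (x ** y) = Mid x (et y)"
proof -
  obtain k a b where ab: "\<forall>i<(k::nat). a i \<in> M \<and> b i \<in> M" "\<Delta> x = (\<Sum>i<k. kron (a i) (b i))"
    using D_ts[OF x] by (rule tensor_spaceE)
  obtain l c d where cd: "\<forall>i<(l::nat). c i \<in> M \<and> d i \<in> M" "\<Delta> y = (\<Sum>i<l. kron (c i) (d i))"
    using D_ts[OF y] by (rule tensor_spaceE)
  have D: "\<Delta> (x ** y) = (\<Sum>p\<in>{..<k} \<times> {..<l}. kron (a (fst p) ** c (snd p)) (b (fst p) ** d (snd p)))"
    by (rule D_rep_mult[OF ab(2) cd(2) x y])
  have "et (x ** y) = (\<Sum>p\<in>{..<k} \<times> {..<l}. (a (fst p) ** c (snd p)) ** S (b (fst p) ** d (snd p)))"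
    by (rule et_rep[OF _ _ D]) (use ab(1) cd(1) M_mult in auto)
  also have "\<dots> = (\<Sum>p\<in>{..<k} \<times> {..<l}. a (fst p) ** (c (snd p) ** S (d (snd p))) ** S (b (fst p)))"
    using ab(1) cd(1) by (intro sum.cong) (auto simp: S_mult matrix_mul_assoc)
  also have "\<dots> = (\<Sum>i<k. \<Sum>j<l. a i ** (c j ** S (d j)) ** S (b i))"
    by (simp add: sum.cartesian_product case_prod_beta)
  also have "\<dots> = (\<Sum>i<k. a i ** (\<Sum>j<l. c j ** S (d j)) ** S (b i))"
    by (simp add: matrix_sum_left matrix_sum_right)
  also have "\<dots> = (\<Sum>i<k. a i ** et y ** S (b i))"
    using et_rep[OF _ _ cd(2)] cd(1) by simp
  also have "\<dots> = Mid x (et y)"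
    using Mid_rep[OF _ _ ab(2)] ab(1) by simp
  finally show ?thesis .
qed

lemma et_mult_Nt:
  assumes x: "x \<in> M" and z: "z \<in> Nt"
  shows "et (x ** z) = Mid x z"
  using et_mult[OF x Nt_M[OF z]] et_Nt_id[OF z] by simp

lemma et_mult_Ns:
  assumes x: "x \<in> M" and w: "w \<in> Ns"
  shows "et (x ** w) = Mid x (S w)"
proof -
  obtain k a b where ab: "\<forall>i<(k::nat). a i \<in> M \<and> b i \<in> M" "\<Delta> x = (\<Sum>i<k. kron (a i) (b i))"
    using D_ts[OF x] by (rule tensor_spaceE)
  have wM: "w \<in> M" using Ns_M w .
  have "\<Delta> (x ** w) = \<Delta> x ** (e ** kron (mat 1) w)" using D_mult[OF x wM] NsD1[OF w] by simp
  also have "\<dots> = \<Delta> x ** kron (mat 1) w" using De_right[OF x] by (simp add: matrix_mul_assoc)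
  also have "\<dots> = (\<Sum>i<k. kron (a i) (b i ** w))" unfolding ab(2) ts_rep_mult_right by simp
  finally have D: "\<Delta> (x ** w) = (\<Sum>i<k. kron (a i) (b i ** w))" .
  have "et (x ** w) = (\<Sum>i<k. a i ** S (b i ** w))"
    by (rule et_rep[OF _ _ D]) (use ab(1) wM M_mult in auto)
  also have "\<dots> = (\<Sum>i<k. a i ** S w ** S (b i))"
    using ab(1) wM by (intro sum.cong) (auto simp: S_mult matrix_mul_assoc)
  also have "\<dots> = Mid x (S w)"
    using Mid_rep[OF _ _ ab(2)] ab(1) by simp
  finally show ?thesis .
qed

lemma e_rep:
  "\<exists>(k::nat) p q. (\<forall>i<k. p i \<in> Ns \<and> q i \<in> Nt) \<and> e = (\<Sum>i<k. kron (p i) (q i))"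
proof -
  obtain k p0 q0 where pq0: "\<forall>i<(k::nat). p0 i \<in> M \<and> q0 i \<in> M" "e = (\<Sum>i<k. kron (p0 i) (q0 i))"
    using e_ts by (rule tensor_spaceE)
  have C3e: "tensor_ext M M (\<lambda>a b. kron a (et b)) e = e"
    using C3[OF one_Ns] unfolding unit_e_def by (simp add: kron_one)
  have e1: "e = (\<Sum>i<k. kron (p0 i) (et (q0 i)))"
    using C3e tem[OF M_sub M_sub bilm_C3, of "{..<k}" p0 q0] pq0 by simp
  have "flip e = (\<Sum>i<k. kron (S (p0 i)) (S (et (q0 i))))"
    using SS_e SS_rep[of "{..<k}" p0 "\<lambda>i. et (q0 i)"] e1 pq0(1) et_M by simp
  then have "e = flip (\<Sum>i<k. kron (S (p0 i)) (S (et (q0 i))))" by (metis flip_flip)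
  then have e2: "e = (\<Sum>i<k. kron (S (et (q0 i))) (S (p0 i)))"
    by (simp add: flip_sum)
  have e3: "e = (\<Sum>i<k. kron (S (et (q0 i))) (et (S (p0 i))))"
    using C3e tem[OF M_sub M_sub bilm_C3, of "{..<k}" "\<lambda>i. S (et (q0 i))" "\<lambda>i. S (p0 i)"] e2 pq0(1) et_M S_M
    by simp
  have "\<forall>i<k. S (et (q0 i)) \<in> Ns \<and> et (S (p0 i)) \<in> Nt"
    using pq0(1) S_Nt et_Nt S_M by blast
  then show ?thesis using e3
    by (intro exI[of _ k] exI[of _ "\<lambda>i. S (et (q0 i))"] exI[of _ "\<lambda>i. et (S (p0 i))"]) simp
qed

end

context base
begin

lemma S_sum1: "(\<And>i. i \<in> I \<Longrightarrow> x i \<in> M) \<Longrightarrow> S (\<Sum>i\<in>I. x i) = (\<Sum>i\<in>I. S (x i))"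
  using S_sum[of I x "\<lambda>_. 1"] by simp

lemma D_S_rep:
  assumes x: "x \<in> M" and fin: "finite I" and ab: "\<forall>i\<in>I. a i \<in> M \<and> b i \<in> M"
    and D: "\<Delta> x = (\<Sum>i\<in>I. kron (a i) (b i))"
  shows "\<Delta> (S x) = (\<Sum>i\<in>I. kron (S (b i)) (S (a i)))"
proof -
  have "flip (\<Delta> (S x)) = SS (\<Delta> x)" using S_flip x by simp
  also have "\<dots> = (\<Sum>i\<in>I. kron (S (a i)) (S (b i)))" unfolding D using SS_rep ab fin by blast
  finally have "\<Delta> (S x) = flip (\<Sum>i\<in>I. kron (S (a i)) (S (b i)))" by (metis flip_flip)
  then show ?thesis by (simp add: flip_sum)
qed

abbreviation "\<tau> \<equiv> theta_t M \<Delta>"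

lemma tau_def': "\<tau> n = lin_trace Nt (\<lambda>m. n ** m)"
  by (simp add: theta_t_def)

lemma tau_add: "a \<in> Nt \<Longrightarrow> b \<in> Nt \<Longrightarrow> \<tau> (a + b) = \<tau> a + \<tau> b"
  unfolding tau_def' by (rule tr_add[OF Nt_alg])

lemma tau_scale: "a \<in> Nt \<Longrightarrow> \<tau> (cscale c a) = c * \<tau> a"
  unfolding tau_def' by (rule tr_scale[OF Nt_alg])

lemma tau_comm: "a \<in> Nt \<Longrightarrow> b \<in> Nt \<Longrightarrow> \<tau> (a ** b) = \<tau> (b ** a)"
  unfolding tau_def' by (rule tr_comm[OF Nt_alg])

lemma tau_lin: "cfunctional_on Nt \<tau>"
  unfolding cfunctional_on_def using tau_add tau_scale by blast

lemma tau_sum: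
  "(\<And>i. i \<in> I \<Longrightarrow> x i \<in> Nt) \<Longrightarrow> \<tau> (\<Sum>i\<in>I. cscale (c i) (x i)) = (\<Sum>i\<in>I. c i * \<tau> (x i))"
proof (induct I rule: infinite_finite_induct)
  case (infinite A) then show ?case using tau_scale[of 0 0] subspD(1)[OF Nt_sub] by simp
next
  case empty then show ?case using tau_scale[of 0 0] subspD(1)[OF Nt_sub] by simp
next
  case (insert a F)
  have "(\<Sum>i\<in>F. cscale (c i) (x i)) \<in> Nt" using insert by (intro subsp_sum[OF Nt_sub] subspD(3)[OF Nt_sub]) auto
  moreover have "cscale (c a) (x a) \<in> Nt" using insert by (intro subspD(3)[OF Nt_sub]) auto
  ultimately show ?case using insert by (simp add: tau_add tau_scale)
qed

lemma Nt_mult': "x \<in> Nt \<Longrightarrow> y \<in> Nt \<Longrightarrow> x ** y \<in> Nt" by (rule Nt_mult)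

abbreviation "E \<equiv> canonical_eps M \<Delta> S"

lemma E_def': "E x = \<tau> (et x)" by (simp add: canonical_eps_def)

lemma E_lin: "cfunctional_on M E"
  unfolding cfunctional_on_def E_def'
  using et_lin et_Nt tau_add tau_scale unfolding clinear_on_def
  by (simp add: M_add M_scale)

lemma E_add: "x \<in> M \<Longrightarrow> y \<in> M \<Longrightarrow> E (x + y) = E x + E y"
  using E_lin unfolding cfunctional_on_def by blast
lemma E_scale: "x \<in> M \<Longrightarrow> E (cscale c x) = c * E x"
  using E_lin unfolding cfunctional_on_def by blast

lemma E_sum:
  "(\<And>i. i \<in> I \<Longrightarrow> x i \<in> M) \<Longrightarrow> E (\<Sum>i\<in>I. cscale (c i) (x i)) = (\<Sum>i\<in>I. c i * E (x i))"
proof (induct I rule: infinite_finite_induct)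
  case (infinite A) then show ?case using E_scale[of 0 0] by simp
next
  case empty then show ?case using E_scale[of 0 0] by simp
next
  case (insert a F)
  have "(\<Sum>i\<in>F. cscale (c i) (x i)) \<in> M" using insert by (intro subsp_sum[OF M_sub] M_scale) auto
  then show ?case using insert by (simp add: E_add E_scale M_scale)
qed

end

locale wk = base +
  assumes R: "\<forall>x\<in>M. tensor_ext M M (\<lambda>a b. cscale (canonical_eps M \<Delta> S b) a) (\<Delta> x) = x"
begin

lemma R_rep:
  assumes x: "x \<in> M" and fin: "finite I" and ab: "\<forall>i\<in>I. a i \<in> M \<and> b i \<in> M"
    and D: "\<Delta> x = (\<Sum>i\<in>I. kron (a i) (b i))"
  shows "x = (\<Sum>i\<in>I. cscale (E (b i)) (a i))"
proof -
  have "x = tensor_ext M M (\<lambda>a b. cscale (E b) a) (\<Delta> x)" using R x by simp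
  also have "\<dots> = (\<Sum>i\<in>I. cscale (E (b i)) (a i))"
    unfolding D by (rule tem[OF M_sub M_sub bilm_scale_r[OF clinear_on_id E_lin] fin ab])
  finally show ?thesis .
qed

lemma LeftS_rep:
  assumes x: "x \<in> M" and fin: "finite I" and ab: "\<forall>i\<in>I. a i \<in> M \<and> b i \<in> M"
    and D: "\<Delta> x = (\<Sum>i\<in>I. kron (a i) (b i))"
  shows "x = (\<Sum>i\<in>I. cscale (E (S (a i))) (b i))"
proof -
  have DS: "\<Delta> (S x) = (\<Sum>i\<in>I. kron (S (b i)) (S (a i)))" by (rule D_S_rep[OF x fin ab D])
  have "S x = (\<Sum>i\<in>I. cscale (E (S (a i))) (S (b i)))"
    by (rule R_rep[OF S_M[OF x] fin _ DS]) (use ab S_M in auto)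
  then have "S (S x) = S (\<Sum>i\<in>I. cscale (E (S (a i))) (S (b i)))" by simp
  also have "\<dots> = (\<Sum>i\<in>I. cscale (E (S (a i))) (S (S (b i))))" by (rule S_sum) (use ab S_M in auto)
  also have "\<dots> = (\<Sum>i\<in>I. cscale (E (S (a i))) (b i))" using ab S_S by simp
  finally show ?thesis using S_S[OF x] by simp
qed

lemma E_S:
  assumes x: "x \<in> M" shows "E (S x) = E x"
proof -
  obtain k a b where ab: "\<forall>i<(k::nat). a i \<in> M \<and> b i \<in> M" "\<Delta> x = (\<Sum>i<k. kron (a i) (b i))"
    using D_ts[OF x] by (rule tensor_spaceE)
  have x1: "x = (\<Sum>i<k. cscale (E (b i)) (a i))" by (rule R_rep[OF x _ _ ab(2)]) (use ab(1) in auto)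
  have x2: "x = (\<Sum>i<k. cscale (E (S (a i))) (b i))" by (rule LeftS_rep[OF x _ _ ab(2)]) (use ab(1) in auto)
  have "E (S x) = E (S (\<Sum>i<k. cscale (E (b i)) (a i)))" by (simp only: x1[symmetric])
  also have "\<dots> = E (\<Sum>i<k. cscale (E (b i)) (S (a i)))" by (subst S_sum) (use ab(1) in auto)
  also have "\<dots> = (\<Sum>i<k. E (b i) * E (S (a i)))" by (rule E_sum) (use ab(1) S_M in auto)
  also have "\<dots> = (\<Sum>i<k. E (S (a i)) * E (b i))" by (simp add: mult.commute)
  also have "\<dots> = E (\<Sum>i<k. cscale (E (S (a i))) (b i))" by (rule E_sum[symmetric]) (use ab(1) in auto)
  also have "\<dots> = E x" by (simp only: x2[symmetric])
  finally show ?thesis .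
qed

lemma LC_rep:
  assumes x: "x \<in> M" and fin: "finite I" and ab: "\<forall>i\<in>I. a i \<in> M \<and> b i \<in> M"
    and D: "\<Delta> x = (\<Sum>i\<in>I. kron (a i) (b i))"
  shows "x = (\<Sum>i\<in>I. cscale (E (a i)) (b i))"
proof -
  have "x = (\<Sum>i\<in>I. cscale (E (S (a i))) (b i))" by (rule LeftS_rep[OF x fin ab D])
  also have "\<dots> = (\<Sum>i\<in>I. cscale (E (a i)) (b i))" using ab E_S by simp
  finally show ?thesis .
qed

lemma LC:
  assumes x: "x \<in> M" shows "tensor_ext M M (\<lambda>a b. cscale (E a) b) (\<Delta> x) = x"
proof -
  obtain k a b where ab: "\<forall>i<(k::nat). a i \<in> M \<and> b i \<in> M" "\<Delta> x = (\<Sum>i<k. kron (a i) (b i))"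
    using D_ts[OF x] by (rule tensor_spaceE)
  have "tensor_ext M M (\<lambda>a b. cscale (E a) b) (\<Delta> x) = (\<Sum>i<k. cscale (E (a i)) (b i))"
    unfolding ab(2) by (rule tem[OF M_sub M_sub bilm_scale_l[OF E_lin clinear_on_id]]) (use ab(1) in auto)
  also have "\<dots> = x" by (rule LC_rep[OF x _ _ ab(2), symmetric]) (use ab(1) in auto)
  finally show ?thesis .
qed

lemma et_adj:
  assumes x: "x \<in> M" shows "et (adj x) = adj (et (S x))"
proof -
  obtain k a b where ab: "\<forall>i<(k::nat). a i \<in> M \<and> b i \<in> M" "\<Delta> x = (\<Sum>i<k. kron (a i) (b i))"
    using D_ts[OF x] by (rule tensor_spaceE)
  have Da: "\<Delta> (adj x) = (\<Sum>i<k. kron (adj (a i)) (adj (b i)))"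
    using D_adj[OF x] unfolding ab(2) by (simp add: adj_sum adj_kron)
  have "et (adj x) = (\<Sum>i<k. adj (a i) ** S (adj (b i)))"
    by (rule et_rep[OF _ _ Da]) (use ab(1) M_adj in auto)
  also have "\<dots> = (\<Sum>i<k. adj (S (b i) ** a i))"
    using ab(1) by (intro sum.cong) (auto simp: S_adj adj_mult)
  also have "\<dots> = adj (\<Sum>i<k. S (b i) ** a i)" by (simp add: adj_sum)
  also have "(\<Sum>i<k. S (b i) ** a i) = et (S x)"
  proof -
    have DS: "\<Delta> (S x) = (\<Sum>i<k. kron (S (b i)) (S (a i)))" by (rule D_S_rep[OF x _ _ ab(2)]) (use ab(1) in auto)
    have "et (S x) = (\<Sum>i<k. S (b i) ** S (S (a i)))" by (rule et_rep[OF _ _ DS]) (use ab(1) S_M in auto)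
    also have "\<dots> = (\<Sum>i<k. S (b i) ** a i)" using ab(1) S_S by simp
    finally show ?thesis by simp
  qed
  finally show ?thesis .
qed

lemma es_S:
  assumes y: "y \<in> M" shows "es y = S (et (S y))"
proof -
  obtain k c d where cd: "\<forall>i<(k::nat). c i \<in> M \<and> d i \<in> M" "\<Delta> y = (\<Sum>i<k. kron (c i) (d i))"
    using D_ts[OF y] by (rule tensor_spaceE)
  have DS: "\<Delta> (S y) = (\<Sum>i<k. kron (S (d i)) (S (c i)))" by (rule D_S_rep[OF y _ _ cd(2)]) (use cd(1) in auto)
  have "et (S y) = (\<Sum>i<k. S (d i) ** S (S (c i)))" by (rule et_rep[OF _ _ DS]) (use cd(1) S_M in auto)
  also have "\<dots> = (\<Sum>i<k. S (d i) ** c i)" using cd(1) S_S by simp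
  finally have "S (et (S y)) = S (\<Sum>i<k. S (d i) ** c i)" by simp
  also have "\<dots> = (\<Sum>i<k. S (S (d i) ** c i))" by (rule S_sum1) (use cd(1) S_M M_mult in auto)
  also have "\<dots> = (\<Sum>i<k. S (c i) ** d i)" using cd(1) by (intro sum.cong) (auto simp: S_mult S_M S_S)
  also have "\<dots> = es y" by (rule es_rep[OF _ _ cd(2), symmetric]) (use cd(1) in auto)
  finally show ?thesis by simp
qed

context
  fixes k :: nat and p q
  assumes pq: "\<forall>i<k. p i \<in> Ns \<and> q i \<in> Nt" and erep: "e = (\<Sum>i<k. kron (p i) (q i))"
begin

lemma pNs: "i < k \<Longrightarrow> p i \<in> Ns" using pq by blast
lemma qNt: "i < k \<Longrightarrow> q i \<in> Nt" using pq by blast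
lemma pM: "i < k \<Longrightarrow> p i \<in> M" using pNs Ns_M by blast
lemma qM: "i < k \<Longrightarrow> q i \<in> M" using qNt Nt_M by blast

lemma star:
  assumes z: "z \<in> Nt"
  shows "S z = (\<Sum>i<k. cscale (\<tau> (q i ** z)) (p i))"
proof -
  define w where "w = S z"
  have w: "w \<in> Ns" unfolding w_def using S_Nt z .
  have wM: "w \<in> M" using Ns_M w .
  have D: "\<Delta> w = (\<Sum>i<k. kron (p i) (w ** q i))"
    using NsD2[OF w] unfolding erep ts_rep_mult_left by simp
  have "w = (\<Sum>i<k. cscale (E (w ** q i)) (p i))"
    by (rule R_rep[OF wM _ _ D]) (use pM qM wM M_mult in auto)
  also have "\<dots> = (\<Sum>i<k. cscale (\<tau> (q i ** z)) (p i))"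
  proof (rule sum.cong[OF refl])
    fix i assume "i \<in> {..<k}"
    then have i: "i < k" by simp
    have "E (w ** q i) = \<tau> (et (q i) ** S w)" using et_Ns_mult[OF w qM[OF i]] by (simp add: E_def')
    also have "\<dots> = \<tau> (q i ** z)" using et_Nt_id[OF qNt[OF i]] S_S[OF Nt_M[OF z]] unfolding w_def by simp
    finally show "cscale (E (w ** q i)) (p i) = cscale (\<tau> (q i ** z)) (p i)" by simp
  qed
  finally show ?thesis unfolding w_def .
qed

lemma e_flip_rep: "e = (\<Sum>i<k. kron (S (q i)) (S (p i)))"
proof -
  have "flip e = (\<Sum>i<k. kron (S (p i)) (S (q i)))"
    using SS_e SS_rep[of "{..<k}" p q] erep pM qM by simp
  then have "e = flip (\<Sum>i<k. kron (S (p i)) (S (q i)))" by (metis flip_flip)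
  then show ?thesis by (simp add: flip_sum)
qed

lemma flip_id: "(\<Sum>i<k. kron (S (p i)) (q i)) = (\<Sum>i<k. kron (q i) (S (p i)))"
proof -
  have h: "bilm Ns Nt (\<lambda>a b. kron (S a) b)"
    by (rule bilm_kron[OF clinear_on_mono[OF S_lin] clinear_on_id]) (auto simp: Ns_M)
  have "(\<Sum>i<k. kron (S (p i)) (q i)) = (\<Sum>i<k. kron (S (S (q i))) (S (p i)))"
    by (rule keym[OF Ns_sub Nt_sub h]) (use pq S_Nt S_Ns erep e_flip_rep in auto)
  also have "\<dots> = (\<Sum>i<k. kron (q i) (S (p i)))" using qM S_S by simp
  finally show ?thesis .
qed

lemma span_id:
  assumes y: "y \<in> Nt"
  shows "y = (\<Sum>i<k. cscale (\<tau> (S (p i) ** y)) (q i))"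
proof -
  have yM: "y \<in> M" using Nt_M y .
  have "y = S (S y)" using S_S yM by simp
  also have "\<dots> = (\<Sum>i<k. cscale (\<tau> (q i ** y)) (S (p i)))"
    unfolding star[OF y] by (rule S_sum) (use pM in auto)
  also have "\<dots> = (\<Sum>i<k. cscale (\<tau> (S (p i) ** y)) (q i))"
  proof -
    have fl: "cfunctional_on Nt (\<lambda>b. \<tau> (b ** y))"
      unfolding cfunctional_on_def using y Nt_mult tau_add tau_scale
      by (simp add: matrix_add_rdistrib' cscale_mult_left)
    have h: "bilm Nt Nt (\<lambda>a b. cscale (\<tau> (b ** y)) a)"
      by (rule bilm_scale_r[OF clinear_on_id fl])
    show ?thesis
      by (rule keym[OF Nt_sub Nt_sub h _ _ _ _ flip_id]) (use pq S_Ns in auto)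
  qed
  finally show ?thesis .
qed

lemma tau_adj:
  assumes y: "y \<in> Nt" shows "\<tau> (adj y) = cnj (\<tau> y)"
proof -
  have one1: "mat 1 = (\<Sum>i<k. cscale (\<tau> (q i)) (p i))" using star[OF one_Nt] by simp
  have eadj: "e = (\<Sum>i<k. kron (adj (p i)) (adj (q i)))"
  proof -
    have "e = adj e" using adj_e by simp
    also have "\<dots> = adj (\<Sum>i<k. kron (p i) (q i))" by (simp only: erep)
    also have "\<dots> = (\<Sum>i<k. kron (adj (p i)) (adj (q i)))" by (simp add: adj_sum adj_kron)
    finally show ?thesis .
  qed
  have h: "bilm Ns Nt (\<lambda>a b. cscale (\<tau> b) a)" by (rule bilm_scale_r[OF clinear_on_id tau_lin])
  have "(\<Sum>i<k. cscale (\<tau> (q i)) (p i)) = (\<Sum>i<k. cscale (\<tau> (adj (q i))) (adj (p i)))"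
    by (rule keym[OF Ns_sub Nt_sub h _ _ _ _ ]) (use pq Ns_adj Nt_adj erep eadj in auto)
  then have one2: "mat 1 = (\<Sum>i<k. cscale (\<tau> (adj (q i))) (adj (p i)))" using one1 by simp
  have one3: "mat 1 = (\<Sum>i<k. cscale (cnj (\<tau> (adj (q i)))) (p i))"
  proof -
    have "mat 1 = adj (mat 1 :: complex^'n^'n)" by simp
    also have "\<dots> = (\<Sum>i<k. cscale (cnj (\<tau> (adj (q i)))) (p i))"
      by (subst one2) (simp add: adj_sum adj_cscale)
    finally show ?thesis .
  qed
  have one4: "mat 1 = (\<Sum>i<k. cscale (cnj (\<tau> (adj (q i)))) (S (p i)))"
  proof -
    have "mat 1 = S (mat 1)" by simp
    also have "\<dots> = (\<Sum>i<k. cscale (cnj (\<tau> (adj (q i)))) (S (p i)))"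
      by (subst one3) (rule S_sum, use pM in auto)
    finally show ?thesis .
  qed
  have SpNt: "S (p i) ** y \<in> Nt" if "i < k" for i using S_Ns[OF pNs[OF that]] y Nt_mult by blast
  have tauy: "\<tau> y = (\<Sum>i<k. cnj (\<tau> (adj (q i))) * \<tau> (S (p i) ** y))"
  proof -
    have "y = mat 1 ** y" by simp
    also have "\<dots> = (\<Sum>i<k. cscale (cnj (\<tau> (adj (q i)))) (S (p i) ** y))"
      by (subst one4) (simp add: matrix_sum_left cscale_mult_left)
    finally have "\<tau> y = \<tau> (\<Sum>i<k. cscale (cnj (\<tau> (adj (q i)))) (S (p i) ** y))" by simp
    also have "\<dots> = (\<Sum>i<k. cnj (\<tau> (adj (q i))) * \<tau> (S (p i) ** y))"
      by (rule tau_sum) (use SpNt in auto)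
    finally show ?thesis .
  qed
  have "adj y = adj (\<Sum>i<k. cscale (\<tau> (S (p i) ** y)) (q i))" using span_id[OF y] by simp
  also have "\<dots> = (\<Sum>i<k. cscale (cnj (\<tau> (S (p i) ** y))) (adj (q i)))" by (simp add: adj_sum adj_cscale)
  finally have "\<tau> (adj y) = \<tau> (\<Sum>i<k. cscale (cnj (\<tau> (S (p i) ** y))) (adj (q i)))" by simp
  also have "\<dots> = (\<Sum>i<k. cnj (\<tau> (S (p i) ** y)) * \<tau> (adj (q i)))"
    by (rule tau_sum) (use qNt Nt_adj in auto)
  finally have "cnj (\<tau> (adj y)) = (\<Sum>i<k. \<tau> (S (p i) ** y) * cnj (\<tau> (adj (q i))))" by simp
  also have "\<dots> = \<tau> y" using tauy by (simp add: mult.commute)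
  finally show ?thesis by (metis complex_cnj_cnj)
qed

lemma E_adj:
  assumes x: "x \<in> M" shows "E (adj x) = cnj (E x)"
proof -
  have "E (adj x) = \<tau> (adj (et (S x)))" using et_adj[OF x] by (simp add: E_def')
  also have "\<dots> = cnj (\<tau> (et (S x)))" by (rule tau_adj[OF et_Nt[OF S_M[OF x]]])
  also have "\<dots> = cnj (E (S x))" by (simp add: E_def')
  also have "\<dots> = cnj (E x)" using E_S[OF x] by simp
  finally show ?thesis .
qed

lemma E_mult:
  assumes x: "x \<in> M" and y: "y \<in> M"
  shows "tensor_ext M M (\<lambda>a b. E a * E b) (kron x (mat 1) ** e ** kron (mat 1) y) = E (x ** y)"
proof -
  define z where "z = et y"
  have z: "z \<in> Nt" unfolding z_def using et_Nt[OF y] .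
  have X: "kron x (mat 1) ** e ** kron (mat 1) y = (\<Sum>i<k. kron (x ** p i) (q i ** y))"
    unfolding erep by (simp add: ts_rep_mult_left ts_rep_mult_right)
  have "tensor_ext M M (\<lambda>a b. E a * E b) (kron x (mat 1) ** e ** kron (mat 1) y)
      = (\<Sum>i<k. E (x ** p i) * E (q i ** y))"
    unfolding X by (rule te[OF M_sub M_sub bil_prod[OF E_lin E_lin]]) (use x y pM qM M_mult in auto)
  also have "\<dots> = (\<Sum>i<k. \<tau> (q i ** z) * E (x ** p i))"
    by (intro sum.cong) (auto simp: E_def' z_def et_Nt_mult[OF qNt y] mult.commute)
  also have "\<dots> = E (\<Sum>i<k. cscale (\<tau> (q i ** z)) (x ** p i))"
    by (rule E_sum[symmetric]) (use x pM M_mult in auto)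
  also have "(\<Sum>i<k. cscale (\<tau> (q i ** z)) (x ** p i)) = x ** S z"
    unfolding star[OF z] by (simp add: matrix_sum_right cscale_mult_right)
  also have "E (x ** S z) = \<tau> (Mid x (S (S z)))"
    using et_mult_Ns[OF x S_Nt[OF z]] by (simp add: E_def')
  also have "\<dots> = \<tau> (Mid x z)" using S_S[OF Nt_M[OF z]] by simp
  also have "\<dots> = E (x ** y)" using et_mult[OF x y] unfolding z_def by (simp add: E_def')
  finally show ?thesis .
qed

lemma et_formula:
  assumes v: "v \<in> M" shows "et v = (\<Sum>i<k. cscale (E (p i ** v)) (q i))"
proof -
  have "et v = (\<Sum>i<k. cscale (\<tau> (S (p i) ** et v)) (q i))" by (rule span_id[OF et_Nt[OF v]])
  also have "\<dots> = (\<Sum>i<k. cscale (E (p i ** v)) (q i))"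
  proof (rule sum.cong[OF refl])
    fix i assume "i \<in> {..<k}" then have i: "i < k" by simp
    have "E (p i ** v) = \<tau> (et v ** S (p i))" using et_Ns_mult[OF pNs[OF i] v] by (simp add: E_def')
    also have "\<dots> = \<tau> (S (p i) ** et v)" by (rule tau_comm[OF et_Nt[OF v] S_Ns[OF pNs[OF i]]])
    finally show "cscale (\<tau> (S (p i) ** et v)) (q i) = cscale (E (p i ** v)) (q i)" by simp
  qed
  finally show ?thesis .
qed

lemma es_formula:
  assumes y: "y \<in> M" shows "es y = (\<Sum>i<k. cscale (E (y ** q i)) (p i))"
proof -
  have "es y = S (et (S y))" by (rule es_S[OF y])
  also have "\<dots> = S (\<Sum>i<k. cscale (E (p i ** S y)) (q i))" using et_formula[OF S_M[OF y]] by simp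
  also have "\<dots> = (\<Sum>i<k. cscale (E (p i ** S y)) (S (q i)))" by (rule S_sum) (use qM in auto)
  also have "\<dots> = (\<Sum>i<k. cscale (E (y ** S (p i))) (S (q i)))"
  proof (rule sum.cong[OF refl])
    fix i assume "i \<in> {..<k}" then have i: "i < k" by simp
    have "S (y ** S (p i)) = p i ** S y" using S_mult[OF y S_M[OF pM[OF i]]] S_S[OF pM[OF i]] by simp
    then have "E (p i ** S y) = E (S (y ** S (p i)))" by simp
    also have "\<dots> = E (y ** S (p i))" by (rule E_S[OF M_mult[OF y S_M[OF pM[OF i]]]])
    finally show "cscale (E (p i ** S y)) (S (q i)) = cscale (E (y ** S (p i))) (S (q i))" by simp
  qed
  also have "\<dots> = (\<Sum>i<k. cscale (E (y ** q i)) (p i))"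
  proof -
    have fl: "cfunctional_on Nt (\<lambda>b. E (y ** b))"
      unfolding cfunctional_on_def using y Nt_M M_mult E_add E_scale
      by (simp add: matrix_add_ldistrib cscale_mult_right)
    have h: "bilm Ns Nt (\<lambda>a b. cscale (E (y ** b)) a)"
      by (rule bilm_scale_r[OF clinear_on_id fl])
    show ?thesis
      by (rule keym[OF Ns_sub Nt_sub h _ _ _ _ ]) (use pq S_Nt S_Ns erep e_flip_rep in auto)
  qed
  finally show ?thesis .
qed

lemma es_counit:
  assumes x: "x \<in> M"
  shows "tensor_ext M M (\<lambda>a b. kron (es a) b) (\<Delta> x) = kron (mat 1) x ** e"
proof -
  obtain l a b where ab: "\<forall>j<(l::nat). a j \<in> M \<and> b j \<in> M" "\<Delta> x = (\<Sum>j<l. kron (a j) (b j))"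
    using D_ts[OF x] by (rule tensor_spaceE)
  have xq: "x ** q i = (\<Sum>j<l. cscale (E (a j ** q i)) (b j))" if i: "i < k" for i
  proof -
    have "\<Delta> (x ** q i) = \<Delta> x ** (e ** kron (q i) (mat 1))" using D_mult[OF x qM[OF i]] NtD1[OF qNt[OF i]] by simp
    also have "\<dots> = \<Delta> x ** kron (q i) (mat 1)" using De_right[OF x] by (simp add: matrix_mul_assoc)
    also have "\<dots> = (\<Sum>j<l. kron (a j ** q i) (b j))" unfolding ab(2) ts_rep_mult_right by simp
    finally have D: "\<Delta> (x ** q i) = (\<Sum>j<l. kron (a j ** q i) (b j))" .
    show ?thesis by (rule LC_rep[OF M_mult[OF x qM[OF i]] _ _ D]) (use ab(1) qM[OF i] M_mult in auto)
  qed
  have "tensor_ext M M (\<lambda>a b. kron (es a) b) (\<Delta> x) = (\<Sum>j<l. kron (es (a j)) (b j))"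
    unfolding ab(2) by (rule tem[OF M_sub M_sub bilm_kron[OF es_lin clinear_on_id]]) (use ab(1) in auto)
  also have "\<dots> = (\<Sum>j<l. \<Sum>i<k. cscale (E (a j ** q i)) (kron (p i) (b j)))"
    using ab(1) by (intro sum.cong) (auto simp: es_formula kron_sum_left kron_cscale_left)
  also have "\<dots> = (\<Sum>i<k. \<Sum>j<l. cscale (E (a j ** q i)) (kron (p i) (b j)))"
    by (rule sum.swap)
  also have "\<dots> = (\<Sum>i<k. kron (p i) (\<Sum>j<l. cscale (E (a j ** q i)) (b j)))"
    by (simp add: kron_sum_right kron_cscale_right)
  also have "\<dots> = (\<Sum>i<k. kron (p i) (x ** q i))"
    by (rule sum.cong[OF refl]) (simp add: xq)
  also have "\<dots> = kron (mat 1) x ** e"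
    unfolding erep by (simp add: ts_rep_mult_left)
  finally show ?thesis .
qed

end

end

theorem theorem2p6p1:
  fixes M :: "(complex^'n::finite^'n) set"
    and \<Delta> :: "complex^'n^'n \<Rightarrow> complex^('n\<times>'n)^('n\<times>'n)"
    and S :: "complex^'n^'n \<Rightarrow> complex^'n^'n"
  assumes "gen_coinv_bialg M \<Delta> S"
    and "counital M \<Delta> S"
  shows "weak_kac M \<Delta> S (canonical_eps M \<Delta> S) \<longleftrightarrow>
    (\<forall>x\<in>M. tensor_ext M M (\<lambda>a b. cscale (canonical_eps M \<Delta> S b) a) (\<Delta> x) = x)"
proof
  assume "weak_kac M \<Delta> S (canonical_eps M \<Delta> S)"
  then show "\<forall>x\<in>M. tensor_ext M M (\<lambda>a b. cscale (canonical_eps M \<Delta> S b) a) (\<Delta> x) = x"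
    unfolding weak_kac_def by blast
next
  assume R: "\<forall>x\<in>M. tensor_ext M M (\<lambda>a b. cscale (canonical_eps M \<Delta> S b) a) (\<Delta> x) = x"
  interpret wk M \<Delta> S
    by (rule wk.intro[OF base.intro[OF assms] wk_axioms.intro[OF R]])
  obtain k p q where pq: "\<forall>i<(k::nat). p i \<in> Ns \<and> q i \<in> Nt" and erep: "e = (\<Sum>i<k. kron (p i) (q i))"
    using e_rep by blast
  show "weak_kac M \<Delta> S (canonical_eps M \<Delta> S)"
    unfolding weak_kac_def
    using assms(1) E_lin LC R E_S E_adj[OF pq erep] E_mult[OF pq erep] es_counit[OF pq erep]
    by blast
qed

end
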